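(* Let $N\ge 2$, let $\Omega\subset\mathbb{R}^N$ be a bounded domain with smooth boundary, let $g\in C^\infty(\overline{\Omega})$ be positive, and let $A,B,p,q$ be positive constants, all independent of $\epsilon$, with $(A-B)(p-q)\ge0$ and $A\neq B$. For $\epsilon>0$ let $u_\epsilon$ be the unique solution of problem (N) described in the context. Then $$1\le \frac{1}{|\Omega|}\int_\Omega e^{pu_\epsilon}\,dx\le\max\Big\{\frac AB,\Big(\frac BA\Big)^{p/q}\Big\},\qquad 1\le \frac{1}{|\Omega|}\int_\Omega e^{-qu_\epsilon}\,dx\le\max\Big\{\frac BA,\Big(\frac AB\Big)^{q/p}\Big\}.$$
   Context: Problem (N): for $\epsilon>0$, find $u_\epsilon\in C^\infty(\Omega)\cap C^1(\overline{\Omega})$ with $$\epsilon^2\nabla\cdot(g\nabla u_\epsilon)=\frac{Ae^{pu_\epsilon}}{\frac{1}{|\Omega|}\int_\Omega e^{pu_\epsilon(y)}dy}-\frac{Be^{-qu_\epsilon}}{\frac{1}{|\Omega|}\int_\Omega e^{-qu_\epsilon(y)}dy}\ \text{ in }\Omega,\qquad \epsilon^2\partial_\nu u_\epsilon=C_{bd}\ \text{ on }\partial\Omega,\qquad \int_\Omega u_\epsilon\,dx=0,$$ where $\partial_\nu$ is the outward normal derivative, $|\Omega|$ the Lebesgue measure of $\Omega$, and $C_{bd}=\frac{|\Omega|(A-B)}{\int_{\partial\Omega} g\,dS_x}$; this solution exists and is unique. *)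

theory Defs
  imports "HOL-Analysis.Analysis"
begin

definition partial :: "'n::finite \<Rightarrow> (real^'n \<Rightarrow> real) \<Rightarrow> real^'n \<Rightarrow> real" where
  "partial i f x = deriv (\<lambda>t. f (x + t *\<^sub>R axis i 1)) 0"

definition grad :: "(real^'n::finite \<Rightarrow> real) \<Rightarrow> real^'n \<Rightarrow> real^'n" where
  "grad f x = (\<chi> i. partial i f x)"

definition divergence :: "(real^'n::finite \<Rightarrow> real^'n) \<Rightarrow> real^'n \<Rightarrow> real" where
  "divergence F x = (\<Sum>i\<in>UNIV. partial i (\<lambda>y. F y $ i) x)"

fun Ck_on :: "nat \<Rightarrow> (real^'n::finite \<Rightarrow> real) \<Rightarrow> (real^'n) set \<Rightarrow> bool" where
  "Ck_on 0 f U = continuous_on U f"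
| "Ck_on (Suc k) f U = (continuous_on U f \<and> (\<forall>x\<in>U. f differentiable (at x))
      \<and> (\<forall>i. Ck_on k (partial i f) U))"

definition smooth_on :: "(real^'n::finite \<Rightarrow> real) \<Rightarrow> (real^'n) set \<Rightarrow> bool" where
  "smooth_on f U \<longleftrightarrow> (\<forall>k. Ck_on k f U)"

definition smooth_bounded_domain :: "(real^'n::finite) set \<Rightarrow> (real^'n \<Rightarrow> real) \<Rightarrow> bool" where
  "smooth_bounded_domain \<Omega> \<phi> \<longleftrightarrow>
     \<Omega> = {x. \<phi> x < 0} \<and> \<Omega> \<noteq> {} \<and> bounded \<Omega> \<and> connected \<Omega> \<and>
     smooth_on \<phi> UNIV \<and> (\<forall>x. \<phi> x = 0 \<longrightarrow> grad \<phi> x \<noteq> 0)"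

definition outward_normal :: "(real^'n::finite \<Rightarrow> real) \<Rightarrow> real^'n \<Rightarrow> real^'n" where
  "outward_normal \<phi> x = grad \<phi> x /\<^sub>R norm (grad \<phi> x)"

text \<open>Surface integral over the boundary {phi = 0} w.r.t. the surface measure dS,
  via the coarea formula: int_{dOmega} f dS = lim_{delta->0+} 1/delta int_{-delta<phi<=0} f |grad phi| dx.\<close>
definition boundary_integral :: "(real^'n::finite \<Rightarrow> real) \<Rightarrow> (real^'n \<Rightarrow> real) \<Rightarrow> real" where
  "boundary_integral \<phi> f = Lim (at_right 0)
     (\<lambda>\<delta>. (1 / \<delta>) * (LINT x:{x. - \<delta> < \<phi> x \<and> \<phi> x \<le> 0}|lebesgue. f x * norm (grad \<phi> x)))"

definition mean :: "(real^'n::finite) set \<Rightarrow> (real^'n \<Rightarrow> real) \<Rightarrow> real" where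
  "mean \<Omega> f = (LINT x:\<Omega>|lebesgue. f x) / measure lebesgue \<Omega>"

text \<open>u solves problem (N) with parameters eps, g, A, B, p, q on the domain (Omega, phi):
  u in C^infty(Omega) cap C^1(closure Omega) (Du is the continuous extension of the gradient
  to the closure), the PDE holds in Omega, the Neumann condition on the boundary, zero mean.\<close>
definition solves_N ::
  "(real^'n::finite) set \<Rightarrow> (real^'n \<Rightarrow> real) \<Rightarrow> (real^'n \<Rightarrow> real) \<Rightarrow> real \<Rightarrow> real \<Rightarrow> real
    \<Rightarrow> real \<Rightarrow> real \<Rightarrow> (real^'n \<Rightarrow> real) \<Rightarrow> bool" where
  "solves_N \<Omega> \<phi> g A B p q \<epsilon> u \<longleftrightarrow>
     smooth_on u \<Omega> \<and> continuous_on (closure \<Omega>) u \<and>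
     (\<exists>Du. continuous_on (closure \<Omega>) Du \<and>
           (\<forall>x\<in>\<Omega>. (u has_derivative (\<lambda>h. Du x \<bullet> h)) (at x)) \<and>
           (\<forall>x\<in>frontier \<Omega>. \<epsilon>\<^sup>2 * (Du x \<bullet> outward_normal \<phi> x) =
               measure lebesgue \<Omega> * (A - B) / boundary_integral \<phi> g)) \<and>
     (\<forall>x\<in>\<Omega>. \<epsilon>\<^sup>2 * divergence (\<lambda>y. g y *\<^sub>R grad u y) x =
         A * exp (p * u x) / mean \<Omega> (\<lambda>y. exp (p * u y))
       - B * exp (- q * u x) / mean \<Omega> (\<lambda>y. exp (- q * u y))) \<and>
     (LINT x:\<Omega>|lebesgue. u x) = 0"

end

theory Submission
  imports Defs
begin

lemma partial_eq_der:
  assumes "(f has_derivative D) (at x)"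
  shows "partial i f x = D (axis i 1)"
proof -
  have lin: "linear D" using assms has_derivative_linear by blast
  have "((\<lambda>t. x + t *\<^sub>R axis i 1) has_derivative (\<lambda>t. t *\<^sub>R axis i 1)) (at 0)"
    by (auto intro!: derivative_eq_intros)
  moreover have "(f has_derivative D) (at (x + 0 *\<^sub>R axis i 1))" using assms by simp
  ultimately have "((\<lambda>t. f (x + t *\<^sub>R axis i 1)) has_derivative (\<lambda>t. D (t *\<^sub>R axis i 1))) (at 0)"
    using has_derivative_compose by blast
  moreover have "(\<lambda>t. D (t *\<^sub>R axis i 1)) = (*) (D (axis i 1))"
    using lin by (auto simp: linear_scale fun_eq_iff)
  ultimately have "((\<lambda>t. f (x + t *\<^sub>R axis i 1)) has_real_derivative D (axis i 1)) (at 0)"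
    by (simp add: has_field_derivative_def)
  then show ?thesis unfolding partial_def by (rule DERIV_imp_deriv)
qed

lemma grad_has_derivative:
  assumes "f differentiable (at x)"
  shows "(f has_derivative (\<lambda>h. grad f x \<bullet> h)) (at x)"
proof -
  obtain D where D: "(f has_derivative D) (at x)" using assms differentiable_def by blast
  have lin: "linear D" using D has_derivative_linear by blast
  have "D h = grad f x \<bullet> h" for h
  proof -
    have "D h = D (\<Sum>i\<in>UNIV. h $ i *\<^sub>R axis i 1)"
      by (metis (no_types) basis_expansion scalar_mult_eq_scaleR sum.cong)
    also have "\<dots> = (\<Sum>i\<in>UNIV. h $ i * D (axis i 1))"
      using lin by (simp add: linear_sum linear_scale)
    also have "\<dots> = grad f x \<bullet> h"
      by (simp add: inner_vec_def grad_def partial_eq_der[OF D] mult.commute)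
    finally show ?thesis .
  qed
  then have "D = (\<lambda>h. grad f x \<bullet> h)" by auto
  then show ?thesis using D by simp
qed

lemma partial_line_deriv:
  assumes "f differentiable (at (x + t *\<^sub>R axis i 1))"
  shows "((\<lambda>s. f (x + s *\<^sub>R axis i 1)) has_real_derivative partial i f (x + t *\<^sub>R axis i 1)) (at t)"
proof -
  let ?y = "x + t *\<^sub>R axis i 1"
  have D: "(f has_derivative (\<lambda>h. grad f ?y \<bullet> h)) (at ?y)" using grad_has_derivative[OF assms] .
  have "((\<lambda>s. x + s *\<^sub>R axis i 1) has_derivative (\<lambda>s. s *\<^sub>R axis i 1)) (at t)"
    by (auto intro!: derivative_eq_intros)
  from has_derivative_compose[OF this D]
  have "((\<lambda>s. f (x + s *\<^sub>R axis i 1)) has_derivative (\<lambda>s. grad f ?y \<bullet> (s *\<^sub>R axis i 1))) (at t)" .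
  moreover have "(\<lambda>s. grad f ?y \<bullet> (s *\<^sub>R axis i 1)) = (*) (partial i f ?y)"
    by (auto simp: fun_eq_iff grad_def inner_axis)
  ultimately show ?thesis by (simp add: has_field_derivative_def)
qed

lemma smooth_on_C2:
  assumes "smooth_on f U"
  shows "continuous_on U f" "\<And>x. x \<in> U \<Longrightarrow> f differentiable (at x)"
    "\<And>i. continuous_on U (partial i f)" "\<And>i x. x \<in> U \<Longrightarrow> partial i f differentiable (at x)"
proof -
  have "Ck_on 2 f U" using assms smooth_on_def by blast
  then have *: "continuous_on U f \<and> (\<forall>x\<in>U. f differentiable (at x)) \<and>
     (\<forall>i. continuous_on U (partial i f) \<and> (\<forall>x\<in>U. partial i f differentiable (at x)) \<and> (\<forall>j. Ck_on 0 (partial j (partial i f)) U))"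
    by (simp add: numeral_2_eq_2)
  show "continuous_on U f" "\<And>x. x \<in> U \<Longrightarrow> f differentiable (at x)"
    "\<And>i. continuous_on U (partial i f)" "\<And>i x. x \<in> U \<Longrightarrow> partial i f differentiable (at x)"
    using * by auto
qed


lemma oned_min:
  fixes h P :: "real \<Rightarrow> real"
  assumes d: "d > 0"
    and hd: "\<And>t. \<bar>t\<bar> < d \<Longrightarrow> (h has_real_derivative P t) (at t)"
    and hm: "\<And>t. \<bar>t\<bar> < d \<Longrightarrow> h 0 \<le> h t"
    and PD: "(P has_real_derivative D) (at 0)"
  shows "P 0 = 0 \<and> D \<ge> 0"
proof
  show P0: "P 0 = 0"
    using DERIV_local_min[OF hd[of 0] d] hm d by auto
  show "D \<ge> 0"
  proof (rule ccontr)
    assume "\<not> D \<ge> 0"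
    then have "D < 0" by simp
    from DERIV_neg_dec_right[OF PD this] obtain d1 where d1: "d1 > 0" "\<And>t. t > 0 \<Longrightarrow> t < d1 \<Longrightarrow> P t < 0"
      using P0 by force
    define t0 where "t0 = min d1 d / 2"
    have t0: "t0 > 0" "t0 < d1" "t0 < d" using d d1 by (auto simp: t0_def)
    have "\<exists>z>0. z < t0 \<and> h t0 - h 0 = (t0 - 0) * P z"
      by (rule MVT2) (use t0 hd in auto)
    then obtain z where z: "z > 0" "z < t0" "h t0 - h 0 = t0 * P z" by auto
    have "P z < 0" using d1 z t0 by auto
    have "t0 * P z < 0" using mult_pos_neg t0(1) \<open>P z < 0\<close> by blast
    then have "h t0 < h 0" using z by linarith
    moreover have "h 0 \<le> h t0" using hm t0 by auto
    ultimately show False by simp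
  qed
qed

lemma interior_ext_div:
  fixes u g :: "real^'n::finite \<Rightarrow> real"
  assumes "open \<Omega>" "smooth_on u \<Omega>" "x0 \<in> \<Omega>" "\<forall>y\<in>\<Omega>. s * u x0 \<le> s * u y"
    "s = 1 \<or> s = -1" "g differentiable (at x0)" "g x0 \<ge> 0"
  shows "s * divergence (\<lambda>y. g y *\<^sub>R grad u y) x0 \<ge> 0"
proof -
  obtain d where d: "d > 0" "ball x0 d \<subseteq> \<Omega>" using assms(1,3) open_contains_ball by blast
  note sm = smooth_on_C2[OF assms(2)]
  have inb: "x0 + t *\<^sub>R axis i 1 \<in> \<Omega>" if "\<bar>t\<bar> < d" for t i
  proof -
    have "dist x0 (x0 + t *\<^sub>R axis i 1) = \<bar>t\<bar>" by (simp add: dist_norm)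
    then show ?thesis using d that by auto
  qed
  have trm: "s * partial i (\<lambda>y. (g y *\<^sub>R grad u y) $ i) x0 \<ge> 0" for i
  proof -
    define P where "P t = partial i u (x0 + t *\<^sub>R axis i 1)" for t
    define h where "h t = s * u (x0 + t *\<^sub>R axis i 1)" for t
    define G where "G t = g (x0 + t *\<^sub>R axis i 1)" for t
    have hd: "(h has_real_derivative s * P t) (at t)" if "\<bar>t\<bar> < d" for t
      unfolding h_def P_def
      by (rule DERIV_cmult, rule partial_line_deriv, rule sm(2), rule inb[OF that])
    have hm: "h 0 \<le> h t" if "\<bar>t\<bar> < d" for t
      using assms(4) inb[OF that] by (simp add: h_def)
    have PD: "(P has_real_derivative partial i (partial i u) x0) (at 0)"
      unfolding P_def using partial_line_deriv[of "partial i u" x0 0 i] sm(4)[OF assms(3)] by simp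
    have PD': "((\<lambda>t. s * P t) has_real_derivative s * partial i (partial i u) x0) (at 0)"
      by (rule DERIV_cmult[OF PD])
    from oned_min[OF d(1) hd hm PD'] have o: "s * P 0 = 0" "s * partial i (partial i u) x0 \<ge> 0" by auto
    have P0: "P 0 = 0" using o(1) assms(5) by auto
    have GD: "(G has_real_derivative partial i g x0) (at 0)"
      unfolding G_def using partial_line_deriv[of g x0 0 i] assms(6) by simp
    have prod: "((\<lambda>t. G t * P t) has_real_derivative partial i g x0 * P 0 + G 0 * partial i (partial i u) x0) (at 0)"
      using DERIV_mult[OF GD PD] by (simp add: algebra_simps)
    have "partial i (\<lambda>y. (g y *\<^sub>R grad u y) $ i) x0 = deriv (\<lambda>t. G t * P t) 0"
      by (simp add: partial_def G_def P_def grad_def)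
    also have "\<dots> = g x0 * partial i (partial i u) x0"
      using DERIV_imp_deriv[OF prod] P0 by (simp add: G_def)
    finally show ?thesis using o(2) assms(7)
      by (metis mult.left_commute mult_nonneg_nonneg)
  qed
  have "s * divergence (\<lambda>y. g y *\<^sub>R grad u y) x0 = (\<Sum>i\<in>UNIV. s * partial i (\<lambda>y. (g y *\<^sub>R grad u y) $ i) x0)"
    by (simp add: divergence_def sum_distrib_left)
  also have "\<dots> \<ge> 0" by (rule sum_nonneg) (use trm in auto)
  finally show ?thesis .
qed


lemma dom_basic:
  assumes "smooth_bounded_domain \<Omega> \<phi>"
  shows "\<Omega> = {x. \<phi> x < 0}" "continuous_on UNIV \<phi>"
    "\<And>x. (\<phi> has_derivative (\<lambda>h. grad \<phi> x \<bullet> h)) (at x)"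
    "continuous_on UNIV (grad \<phi>)" "open \<Omega>" "bounded \<Omega>" "\<Omega> \<noteq> {}"
    "\<And>x. \<phi> x = 0 \<Longrightarrow> grad \<phi> x \<noteq> 0"
proof -
  have sm: "smooth_on \<phi> UNIV" and O: "\<Omega> = {x. \<phi> x < 0}"
    using assms by (auto simp: smooth_bounded_domain_def)
  note C = smooth_on_C2[OF sm]
  show "\<Omega> = {x. \<phi> x < 0}" by (fact O)
  show "continuous_on UNIV \<phi>" by (fact C(1))
  show "\<And>x. (\<phi> has_derivative (\<lambda>h. grad \<phi> x \<bullet> h)) (at x)"
    using C(2) grad_has_derivative by blast
  show "continuous_on UNIV (grad \<phi>)"
    unfolding grad_def by (intro continuous_on_vec_lambda C(3))
  show "open \<Omega>" unfolding O
    using C(1) open_Collect_less[of \<phi> "\<lambda>_. 0"] by (simp add: continuous_on_eq_continuous_at)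
  show "bounded \<Omega>" "\<Omega> \<noteq> {}" "\<And>x. \<phi> x = 0 \<Longrightarrow> grad \<phi> x \<noteq> 0"
    using assms by (auto simp: smooth_bounded_domain_def)
qed

lemma grad_dot_normal:
  assumes "grad \<phi> x \<noteq> 0" shows "grad \<phi> x \<bullet> outward_normal \<phi> x = norm (grad \<phi> x)"
proof -
  let ?v = "grad \<phi> x"
  have "?v \<bullet> (?v /\<^sub>R norm ?v) = (?v \<bullet> ?v) / norm ?v" by (simp add: divide_inverse_commute)
  also have "\<dots> = norm ?v ^ 2 / norm ?v" by (simp add: power2_norm_eq_inner)
  also have "\<dots> = norm ?v" using assms by (simp add: power2_eq_square)
  finally show ?thesis by (simp add: outward_normal_def)
qed

lemma inward:
  assumes "smooth_bounded_domain \<Omega> \<phi>" "\<phi> x0 = 0"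
  shows "\<exists>d>0. \<forall>t. 0 < t \<and> t < d \<longrightarrow> \<phi> (x0 - t *\<^sub>R outward_normal \<phi> x0) < 0"
proof -
  note B = dom_basic[OF assms(1)]
  let ?n = "outward_normal \<phi> x0"
  have gnz: "grad \<phi> x0 \<noteq> 0" using B(8) assms(2) .
  have "((\<lambda>t. x0 - t *\<^sub>R ?n) has_derivative (\<lambda>t. - (t *\<^sub>R ?n))) (at 0)"
    by (auto intro!: derivative_eq_intros)
  moreover have "(\<phi> has_derivative (\<lambda>h. grad \<phi> x0 \<bullet> h)) (at (x0 - 0 *\<^sub>R ?n))" using B(3)[of x0] by simp
  ultimately have "((\<lambda>t. \<phi> (x0 - t *\<^sub>R ?n)) has_derivative (\<lambda>t. grad \<phi> x0 \<bullet> (- (t *\<^sub>R ?n)))) (at 0)"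
    by (rule has_derivative_compose)
  moreover have "(\<lambda>t. grad \<phi> x0 \<bullet> (- (t *\<^sub>R ?n))) = (*) (- norm (grad \<phi> x0))"
    using grad_dot_normal[OF gnz] by (auto simp: fun_eq_iff)
  ultimately have "((\<lambda>t. \<phi> (x0 - t *\<^sub>R ?n)) has_real_derivative (- norm (grad \<phi> x0))) (at 0)"
    by (simp add: has_field_derivative_def)
  from DERIV_neg_dec_right[OF this] gnz obtain d where "d > 0" "\<And>h. h > 0 \<Longrightarrow> h < d \<Longrightarrow> \<phi> (x0 - h *\<^sub>R ?n) < \<phi> x0"
    by force
  then show ?thesis using assms(2) by auto
qed

lemma norm_outward_normal:
  assumes "grad \<phi> x \<noteq> 0" shows "norm (outward_normal \<phi> x) = 1"
  using assms by (simp add: outward_normal_def)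

lemma dom_closure:
  assumes "smooth_bounded_domain \<Omega> \<phi>"
  shows "closure \<Omega> = {x. \<phi> x \<le> 0}" "frontier \<Omega> = {x. \<phi> x = 0}" "compact (closure \<Omega>)"
proof -
  note B = dom_basic[OF assms]
  have cl: "closed {x. \<phi> x \<le> 0}"
    using B(2) closed_Collect_le[of \<phi> "\<lambda>_. 0"] by (simp add: continuous_on_eq_continuous_at)
  have sub1: "closure \<Omega> \<subseteq> {x. \<phi> x \<le> 0}"
    by (rule closure_minimal) (use B(1) cl in auto)
  have sub2: "{x. \<phi> x = 0} \<subseteq> closure \<Omega>"
  proof
    fix x0 assume "x0 \<in> {x. \<phi> x = 0}"
    then have x0: "\<phi> x0 = 0" by simp
    obtain d where d: "d > 0" "\<And>t. 0 < t \<Longrightarrow> t < d \<Longrightarrow> \<phi> (x0 - t *\<^sub>R outward_normal \<phi> x0) < 0"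
      using inward[OF assms x0] by blast
    have nn: "norm (outward_normal \<phi> x0) = 1" using norm_outward_normal B(8) x0 by blast
    show "x0 \<in> closure \<Omega>"
      unfolding closure_approachable
    proof (intro allI impI)
      fix e :: real assume "e > 0"
      define t where "t = min d e / 2"
      have t: "0 < t" "t < d" "t < e" using d \<open>e>0\<close> by (auto simp: t_def)
      have "x0 - t *\<^sub>R outward_normal \<phi> x0 \<in> \<Omega>" using d(2) t B(1) by auto
      moreover have "dist (x0 - t *\<^sub>R outward_normal \<phi> x0) x0 < e"
        using t nn by (simp add: dist_norm)
      ultimately show "\<exists>y\<in>\<Omega>. dist y x0 < e" by blast
    qed
  qed
  show clo: "closure \<Omega> = {x. \<phi> x \<le> 0}"
  proof
    show "{x. \<phi> x \<le> 0} \<subseteq> closure \<Omega>"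
    proof
      fix x assume "x \<in> {x. \<phi> x \<le> 0}"
      show "x \<in> closure \<Omega>"
      proof (cases "\<phi> x = 0")
        case True then show ?thesis using sub2 by blast
      next
        case False
        then have "x \<in> \<Omega>" using \<open>x \<in> {x. \<phi> x \<le> 0}\<close> B(1) by simp
        then show ?thesis using closure_subset by blast
      qed
    qed
  qed (fact sub1)
  have "frontier \<Omega> = closure \<Omega> - \<Omega>" unfolding frontier_def interior_open[OF B(5)] ..
  moreover have "{x. \<phi> x \<le> 0} - {x. \<phi> x < 0} = {x. \<phi> x = (0::real)}" by auto
  ultimately show "frontier \<Omega> = {x. \<phi> x = 0}"
    by (metis B(1) clo)
  show "compact (closure \<Omega>)"
    using B(6) compact_closure by blast
qed

lemma boundary_ext:
  fixes u :: "real^'n::finite \<Rightarrow> real"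
  assumes dom: "smooth_bounded_domain \<Omega> \<phi>" and x0: "x0 \<in> frontier \<Omega>"
    and contu: "continuous_on (closure \<Omega>) u" and contD: "continuous_on (closure \<Omega>) Du"
    and der: "\<forall>x\<in>\<Omega>. (u has_derivative (\<lambda>h. Du x \<bullet> h)) (at x)"
    and mn: "\<forall>y\<in>closure \<Omega>. s * u x0 \<le> s * u y" and s: "s = 1 \<or> s = -1"
  shows "s * (Du x0 \<bullet> outward_normal \<phi> x0) \<le> 0"
proof (rule ccontr)
  assume "\<not> ?thesis"
  then have pos: "s * (Du x0 \<bullet> outward_normal \<phi> x0) > 0" by simp
  note B = dom_basic[OF dom]
  note Cl = dom_closure[OF dom]
  let ?n = "outward_normal \<phi> x0"
  have phi0: "\<phi> x0 = 0" using x0 Cl(2) by auto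
  have nn: "norm ?n = 1" using norm_outward_normal B(8) phi0 by blast
  have x0c: "x0 \<in> closure \<Omega>" using x0 frontier_def by auto
  have cont: "continuous_on (closure \<Omega>) (\<lambda>y. s * (Du y \<bullet> ?n))"
    by (intro continuous_intros contD)
  obtain e where e: "e > 0" "\<And>y. y \<in> closure \<Omega> \<Longrightarrow> dist y x0 < e \<Longrightarrow> s * (Du y \<bullet> ?n) > 0"
  proof -
    obtain e where e: "e > 0" "\<And>y. y \<in> closure \<Omega> \<Longrightarrow> dist y x0 < e \<Longrightarrow>
        dist (s * (Du y \<bullet> ?n)) (s * (Du x0 \<bullet> ?n)) < s * (Du x0 \<bullet> ?n)"
      using cont x0c pos unfolding continuous_on_iff by meson
    show ?thesis
    proof (rule that[OF e(1)])
      fix y assume y: "y \<in> closure \<Omega>" "dist y x0 < e"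
      show "s * (Du y \<bullet> ?n) > 0" using e(2)[OF y] by (simp add: dist_real_def abs_less_iff)
    qed
  qed
  obtain d where d: "d > 0" "\<And>t. 0 < t \<Longrightarrow> t < d \<Longrightarrow> \<phi> (x0 - t *\<^sub>R ?n) < 0"
    using inward[OF dom phi0] by blast
  define t1 where "t1 = min d e / 2"
  have t1: "0 < t1" "t1 < d" "t1 < e" using d e by (auto simp: t1_def)
  define f where "f t = s * u (x0 - t *\<^sub>R ?n)" for t
  have inO: "x0 - t *\<^sub>R ?n \<in> \<Omega>" if "0 < t" "t \<le> t1" for t
    using d(2)[of t] that t1 B(1) by auto
  have inC: "x0 - t *\<^sub>R ?n \<in> closure \<Omega>" if "0 \<le> t" "t \<le> t1" for t
    using inO[of t] that x0c closure_subset by (cases "t = 0") auto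
  have contf: "continuous_on {0..t1} f"
  proof -
    have c1: "continuous_on {0..t1} (\<lambda>t. x0 - t *\<^sub>R ?n)" by (intro continuous_intros)
    have "(\<lambda>t. x0 - t *\<^sub>R ?n) ` {0..t1} \<subseteq> closure \<Omega>" using inC by auto
    then have "continuous_on ((\<lambda>t. x0 - t *\<^sub>R ?n) ` {0..t1}) u" using contu continuous_on_subset by blast
    from continuous_on_compose[OF c1 this] have "continuous_on {0..t1} (\<lambda>t. u (x0 - t *\<^sub>R ?n))"
      by (simp add: o_def)
    then show ?thesis unfolding f_def by (intro continuous_intros)
  qed
  have fder: "(f has_real_derivative s * (Du (x0 - t *\<^sub>R ?n) \<bullet> (- ?n))) (at t)" if "0 < t" "t < t1" for t
  proof -
    have "((\<lambda>t. x0 - t *\<^sub>R ?n) has_derivative (\<lambda>t. - (t *\<^sub>R ?n))) (at t)"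
      by (auto intro!: derivative_eq_intros)
    from has_derivative_compose[OF this der[rule_format, OF inO[of t]]] that
    have "((\<lambda>t. u (x0 - t *\<^sub>R ?n)) has_derivative (\<lambda>h. Du (x0 - t *\<^sub>R ?n) \<bullet> (- (h *\<^sub>R ?n)))) (at t)"
      by simp
    moreover have "(\<lambda>h. Du (x0 - t *\<^sub>R ?n) \<bullet> (- (h *\<^sub>R ?n))) = (*) (Du (x0 - t *\<^sub>R ?n) \<bullet> (- ?n))"
      by (auto simp: fun_eq_iff)
    ultimately have "((\<lambda>t. u (x0 - t *\<^sub>R ?n)) has_real_derivative (Du (x0 - t *\<^sub>R ?n) \<bullet> (- ?n))) (at t)"
      by (simp add: has_field_derivative_def)
    then show ?thesis unfolding f_def by (rule DERIV_cmult)
  qed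
  obtain l z where lz: "0 < z" "z < t1" "DERIV f z :> l" "f t1 - f 0 = (t1 - 0) * l"
    using MVT[OF t1(1) contf] fder real_differentiable_def by blast
  have l: "l = s * (Du (x0 - z *\<^sub>R ?n) \<bullet> (- ?n))"
    using DERIV_unique[OF lz(3) fder[OF lz(1,2)]] .
  have "dist (x0 - z *\<^sub>R ?n) x0 < e" using nn lz t1 by (simp add: dist_norm)
  then have "s * (Du (x0 - z *\<^sub>R ?n) \<bullet> ?n) > 0" using e(2) inC[of z] lz by auto
  then have "l < 0" using l by simp
  then have "t1 * l < 0" using t1(1) mult_pos_neg by blast
  then have "f t1 < f 0" using lz(4) by simp
  moreover have "f 0 \<le> f t1" using mn inC[of t1] t1 by (simp add: f_def)
  ultimately show False by simp
qed

lemma ai_compact: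
  fixes f :: "real^'n::finite \<Rightarrow> real"
  assumes "compact K" "continuous_on K f" "S \<in> sets lebesgue" "S \<subseteq> K"
  shows "f absolutely_integrable_on S"
proof -
  have cS: "continuous_on S f" using assms continuous_on_subset by blast
  have meas: "f \<in> borel_measurable (lebesgue_on S)"
    using continuous_imp_measurable_on_sets_lebesgue[OF cS assms(3)] .
  have "bounded (f ` K)" using compact_imp_bounded[OF compact_continuous_image[OF assms(2,1)]] .
  then obtain B where B0: "B > 0" "\<forall>y\<in>f ` K. norm y \<le> B" unfolding bounded_pos by blast
  then have B: "B > 0" "\<And>x. x \<in> K \<Longrightarrow> norm (f x) \<le> B" by auto
  have "bounded S" using assms(1,4) compact_imp_bounded bounded_subset by blast
  then have "S \<in> lmeasurable" using assms(3) bounded_set_imp_lmeasurable by blast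
  then have "(\<lambda>x. B) integrable_on S" by (rule integrable_on_const)
  then show ?thesis
    by (rule measurable_bounded_by_integrable_imp_absolutely_integrable[OF meas assms(3)])
       (use B assms(4) in auto)
qed

lemma mean_bounds:
  fixes f :: "real^'n::finite \<Rightarrow> real"
  assumes O: "\<Omega> \<in> sets lebesgue" "measure lebesgue \<Omega> > 0" and K: "compact K" "\<Omega> \<subseteq> K"
    and f: "continuous_on K f"
  shows "mean \<Omega> f = integral \<Omega> f / measure lebesgue \<Omega>"
    "(\<And>x. x \<in> \<Omega> \<Longrightarrow> f x \<le> c) \<Longrightarrow> mean \<Omega> f \<le> c"
    "(\<And>x. x \<in> \<Omega> \<Longrightarrow> c \<le> f x) \<Longrightarrow> c \<le> mean \<Omega> f"
proof -
  have ai: "f absolutely_integrable_on \<Omega>" by (rule ai_compact[OF K(1) f O(1) K(2)])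
  show me: "mean \<Omega> f = integral \<Omega> f / measure lebesgue \<Omega>"
    unfolding mean_def using set_lebesgue_integral_eq_integral(2)[OF ai] by simp
  have "bounded \<Omega>" using K compact_imp_bounded bounded_subset by blast
  then have lm: "\<Omega> \<in> lmeasurable" using O(1) bounded_set_imp_lmeasurable by blast
  have fi: "f integrable_on \<Omega>" using set_lebesgue_integral_eq_integral(1)[OF ai] .
  have ci: "(\<lambda>x. c) integrable_on \<Omega>" using lm by (rule integrable_on_const)
  have ic: "integral \<Omega> (\<lambda>x. c) = c * measure lebesgue \<Omega>"
    using lmeasure_integral[OF lm] integral_mult_right[of \<Omega> c "\<lambda>x. 1"] by simp
  show "mean \<Omega> f \<le> c" if "\<And>x. x \<in> \<Omega> \<Longrightarrow> f x \<le> c"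
  proof -
    have "integral \<Omega> f \<le> c * measure lebesgue \<Omega>"
      using integral_le[OF fi ci that] ic by simp
    then show ?thesis unfolding me using O(2) by (simp add: divide_le_eq)
  qed
  show "c \<le> mean \<Omega> f" if "\<And>x. x \<in> \<Omega> \<Longrightarrow> c \<le> f x"
  proof -
    have "c * measure lebesgue \<Omega> \<le> integral \<Omega> f"
      using integral_le[OF ci fi that] ic by simp
    then show ?thesis unfolding me using O(2) by (simp add: le_divide_eq)
  qed
qed

lemma mean_exp_ge1:
  fixes u :: "real^'n::finite \<Rightarrow> real"
  assumes O: "\<Omega> \<in> sets lebesgue" "measure lebesgue \<Omega> > 0" and K: "compact K" "\<Omega> \<subseteq> K"
    and u: "continuous_on K u" and z: "(LINT x:\<Omega>|lebesgue. u x) = 0"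
  shows "1 \<le> mean \<Omega> (\<lambda>x. exp (c * u x))"
proof -
  have cf: "continuous_on K (\<lambda>x. exp (c * u x))" by (intro continuous_intros u)
  have aiu: "u absolutely_integrable_on \<Omega>" by (rule ai_compact[OF K(1) u O(1) K(2)])
  have aie: "(\<lambda>x. exp (c * u x)) absolutely_integrable_on \<Omega>" by (rule ai_compact[OF K(1) cf O(1) K(2)])
  have iu: "integral \<Omega> u = 0" using set_lebesgue_integral_eq_integral(2)[OF aiu] z by simp
  have "bounded \<Omega>" using K compact_imp_bounded bounded_subset by blast
  then have lm: "\<Omega> \<in> lmeasurable" using O(1) bounded_set_imp_lmeasurable by blast
  have i1: "(\<lambda>x. 1 + c * u x) integrable_on \<Omega>"
    using integrable_add[OF integrable_on_const[OF lm, of 1] integrable_on_cmult_right[OF set_lebesgue_integral_eq_integral(1)[OF aiu]]]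
    by (simp add: mult.commute)
  have "integral \<Omega> (\<lambda>x. 1 + c * u x) = measure lebesgue \<Omega>"
    using integral_add[OF integrable_on_const[OF lm, of 1] integrable_on_cmult_right[OF set_lebesgue_integral_eq_integral(1)[OF aiu]]]
      lmeasure_integral[OF lm] iu by (simp add: mult.commute)
  moreover have "integral \<Omega> (\<lambda>x. 1 + c * u x) \<le> integral \<Omega> (\<lambda>x. exp (c * u x))"
    by (rule integral_le[OF i1 set_lebesgue_integral_eq_integral(1)[OF aie]]) (simp add: exp_ge_add_one_self)
  ultimately have "measure lebesgue \<Omega> \<le> integral \<Omega> (\<lambda>x. exp (c * u x))" by simp
  then show ?thesis using mean_bounds(1)[OF O K cf] O(2) by (simp add: le_divide_eq)
qed


lemma ai_support:
  fixes f :: "real^'n::finite \<Rightarrow> real"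
  assumes "continuous_on UNIV f" "\<And>z. z \<notin> cbox a b \<Longrightarrow> f z = 0" "S \<in> sets lebesgue"
  shows "f absolutely_integrable_on S"
proof -
  have "f absolutely_integrable_on (S \<inter> cbox a b)"
  proof (rule ai_compact[of "cbox a b"])
    show "continuous_on (cbox a b) f" using assms(1) continuous_on_subset by blast
    show "S \<inter> cbox a b \<in> sets lebesgue" using assms(3) by (simp add: borel_closed sets.Int)
  qed auto
  then have "(\<lambda>x. if x \<in> S \<inter> cbox a b then f x else 0) absolutely_integrable_on UNIV"
    using absolutely_integrable_restrict_UNIV by blast
  moreover have "(\<lambda>x. if x \<in> S \<inter> cbox a b then f x else 0) = (\<lambda>x. if x \<in> S then f x else 0)"
    using assms(2) by (auto simp: fun_eq_iff)
  ultimately show ?thesis using absolutely_integrable_restrict_UNIV by metis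
qed

lemma cov_real:
  fixes K :: "real^'m::{finite,wellorder} \<Rightarrow> real" and g :: "real^'m::_ \<Rightarrow> real^'m::_"
    and k :: 'm
  assumes S: "S \<in> sets lebesgue"
    and der: "\<And>x. x \<in> S \<Longrightarrow> (g has_derivative g' x) (at x within S)"
    and inj: "inj_on g S" and K: "K absolutely_integrable_on (g ` S)"
  shows "integral S (\<lambda>x. \<bar>det (matrix (g' x))\<bar> * K (g x)) = integral (g ` S) K"
proof -
  define f where "f z = K z *\<^sub>R axis k (1::real)" for z
  have fa: "f absolutely_integrable_on (g ` S)"
    unfolding f_def using absolutely_integrable_scaleR_right[OF K] .
  have "(\<lambda>x. \<bar>det (matrix (g' x))\<bar> *\<^sub>R f (g x)) absolutely_integrable_on S \<and>
           integral S (\<lambda>x. \<bar>det (matrix (g' x))\<bar> *\<^sub>R f (g x)) = integral (g ` S) f"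
    using has_absolute_integral_change_of_variables[OF S der inj, of f "integral (g ` S) f"] fa by blast
  then have L: "(\<lambda>x. \<bar>det (matrix (g' x))\<bar> *\<^sub>R f (g x)) integrable_on S"
      "integral S (\<lambda>x. \<bar>det (matrix (g' x))\<bar> *\<^sub>R f (g x)) = integral (g ` S) f"
    using absolutely_integrable_on_def by blast+
  have fi: "f integrable_on (g ` S)" using fa absolutely_integrable_on_def by blast
  have "integral S (\<lambda>x. \<bar>det (matrix (g' x))\<bar> * K (g x)) =
        integral S (\<lambda>x. (\<bar>det (matrix (g' x))\<bar> *\<^sub>R f (g x)) $ k)"
    by (simp add: f_def)
  also have "\<dots> = integral S (\<lambda>x. \<bar>det (matrix (g' x))\<bar> *\<^sub>R f (g x)) $ k"
    by (rule integral_component_eq_cart[OF L(1)])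
  also have "\<dots> = integral (g ` S) f $ k" using L(2) by simp
  also have "\<dots> = integral (g ` S) (\<lambda>z. f z $ k)"
    by (rule integral_component_eq_cart[OF fi, symmetric])
  also have "\<dots> = integral (g ` S) K" by (simp add: f_def)
  finally show ?thesis .
qed

definition slab :: "'m::finite \<Rightarrow> real \<Rightarrow> (real^'m) set" where
  "slab i d = {z. - d < z $ i \<and> z $ i \<le> 0}"

definition sc :: "'m::finite \<Rightarrow> real \<Rightarrow> real^'m \<Rightarrow> real^'m" where
  "sc i d z = z + ((d - 1) * z $ i) *\<^sub>R axis i 1"

definition prj :: "'m::finite \<Rightarrow> real^'m \<Rightarrow> real^'m" where
  "prj i z = z - (z $ i) *\<^sub>R axis i 1"

lemma sc_nth: "sc i d z $ j = (if j = i then d * z $ i else z $ j)"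
  by (simp add: sc_def axis_def algebra_simps)

lemma prj_nth: "prj i z $ j = (if j = i then 0 else z $ j)"
  by (simp add: prj_def axis_def)

lemma slab_sets: "slab i d \<in> sets lebesgue"
proof -
  have "slab i d = {z. - d < z $ i} \<inter> {z. z $ i \<le> 0}" by (auto simp: slab_def)
  moreover have "{z::real^'a. - d < z $ i} \<in> sets lebesgue"
    using open_halfspace_component_gt_cart by (simp add: borel_open)
  moreover have "{z::real^'a. z $ i \<le> 0} \<in> sets lebesgue"
    using closed_halfspace_component_le_cart by (simp add: borel_closed)
  ultimately show ?thesis by simp
qed

lemma linear_sc: "linear (sc i d)"
  by (rule linearI) (simp_all add: sc_def algebra_simps)

lemma linear_prj: "linear (prj i)"
  by (rule linearI) (simp_all add: prj_def algebra_simps)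

lemma det_sc: "det (matrix (sc i d)) = d"
proof -
  have "det (matrix (sc i d)) = (\<Prod>a\<in>UNIV. matrix (sc i d) $ a $ a)"
    by (rule det_diagonal) (simp add: matrix_def sc_nth axis_def)
  also have "\<dots> = (\<Prod>a\<in>UNIV. if a = i then d else 1)"
    by (intro prod.cong) (auto simp: matrix_def sc_nth axis_def)
  also have "\<dots> = d" by (simp add: prod.delta)
  finally show ?thesis .
qed

lemma sc_image: assumes "d > 0" shows "sc i d ` slab i 1 = slab i d"
proof
  show "sc i d ` slab i 1 \<subseteq> slab i d"
  proof
    fix y assume "y \<in> sc i d ` slab i 1"
    then obtain x where x: "x \<in> slab i 1" "y = sc i d x" by blast
    have "d * (-1) < d * x $ i" using x(1) assms by (intro mult_strict_left_mono) (auto simp: slab_def)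
    moreover have "d * x $ i \<le> 0" using x(1) assms by (simp add: slab_def mult_le_0_iff)
    ultimately show "y \<in> slab i d" using x(2) by (simp add: slab_def sc_nth)
  qed
  show "slab i d \<subseteq> sc i d ` slab i 1"
  proof
    fix z assume z: "z \<in> slab i d"
    define w where "w = z + ((1 / d - 1) * z $ i) *\<^sub>R axis i 1"
    have wi: "w $ j = (if j = i then z $ i / d else z $ j)" for j
      by (simp add: w_def axis_def algebra_simps)
    have "sc i d w = z" using assms by (simp add: vec_eq_iff sc_nth wi)
    moreover have "w \<in> slab i 1" using z assms by (simp add: slab_def wi divide_le_0_iff less_divide_eq)
    ultimately show "z \<in> sc i d ` slab i 1" by blast
  qed
qed


lemma uc_support:
  fixes K :: "real^'m::finite \<Rightarrow> real"
  assumes cK: "continuous_on UNIV K" and sK: "\<And>z. z \<notin> cbox a b \<Longrightarrow> K z = 0" and e: "e > 0"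
  shows "\<exists>d>0. \<forall>x y. dist x y < d \<longrightarrow> \<bar>K x - K y\<bar> < e"
proof -
  obtain R where R: "R > 0" "cbox a b \<subseteq> ball 0 R"
    using bounded_subset_ballD[OF bounded_cbox[of a b], of 0] by blast
  let ?C = "cball (0::real^'m) (R + 1)"
  have "uniformly_continuous_on ?C K"
    by (rule compact_uniformly_continuous) (use cK continuous_on_subset in auto)
  then obtain d0 where d0: "d0 > 0" "\<And>x x'. x \<in> ?C \<Longrightarrow> x' \<in> ?C \<Longrightarrow> dist x' x < d0 \<Longrightarrow> dist (K x') (K x) < e"
    unfolding uniformly_continuous_on_def using e by metis
  have out: "K x = 0 \<and> K y = 0" if "x \<notin> ?C" "dist x y < 1" for x y
  proof -
    have nx: "norm x > R + 1" using that(1) by (simp add: dist_norm)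
    have "norm x \<le> norm y + dist x y" by (metis dist_norm norm_triangle_sub add.commute)
    then have ny: "norm y > R" using nx that(2) by linarith
    have "x \<notin> cbox a b" using R(2) nx by (auto simp: dist_norm)
    moreover have "y \<notin> cbox a b" using R(2) ny by (auto simp: dist_norm)
    ultimately show ?thesis using sK by blast
  qed
  show ?thesis
  proof (intro exI[of _ "min d0 1"] conjI allI impI)
    show "min d0 1 > 0" using d0 by simp
    fix x y :: "real^'m" assume xy: "dist x y < min d0 1"
    show "\<bar>K x - K y\<bar> < e"
    proof (cases "x \<in> ?C \<and> y \<in> ?C")
      case True
      then have "dist (K x) (K y) < e" using d0(2)[of y x] xy by simp
      then show ?thesis by (simp add: dist_real_def)
    next
      case False
      then consider "x \<notin> ?C" | "y \<notin> ?C" by blast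
      then show ?thesis
      proof cases
        case 1 then show ?thesis using out[of x y] xy e by simp
      next
        case 2 then show ?thesis using out[of y x] xy e by (simp add: dist_commute)
      qed
    qed
  qed
qed

lemma scale_identity:
  fixes K :: "real^'m::{finite,wellorder} \<Rightarrow> real"
  assumes cK: "continuous_on UNIV K" and sK: "\<And>z. z \<notin> cbox a b \<Longrightarrow> K z = 0" and d: "d > 0"
  shows "integral (slab i d) K = d * integral (slab i 1) (\<lambda>z. K (sc i d z))"
proof -
  have inj: "inj_on (sc i d) (slab i 1)"
  proof -
    have "det (matrix (sc i d)) \<noteq> 0" using det_sc[of i d] d by simp
    then have "inj (sc i d)" using det_nz_iff_inj[OF linear_sc[of i d]] by simp
    then show ?thesis by (simp add: inj_on_def inj_def)
  qed
  have ai: "K absolutely_integrable_on (sc i d ` slab i 1)"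
    using ai_support[where f=K and a=a and b=b and S="slab i d", OF cK sK slab_sets] sc_image[OF d, of i] by simp
  have "integral (slab i 1) (\<lambda>x. \<bar>det (matrix (sc i d))\<bar> * K (sc i d x)) = integral (sc i d ` slab i 1) K"
    by (rule cov_real[OF slab_sets _ inj ai]) (rule linear_imp_has_derivative[OF linear_sc])
  then show ?thesis using d by (simp add: sc_image[OF d] det_sc)
qed

lemma sc_minus_prj: "sc i d z - prj i z = (d * z $ i) *\<^sub>R axis i 1"
  by (simp add: vec_eq_iff sc_nth prj_nth axis_def)

lemma slab_limit:
  fixes K :: "real^'m::{finite,wellorder} \<Rightarrow> real"
  assumes cK: "continuous_on UNIV K" and sK: "\<And>z. z \<notin> cbox a b \<Longrightarrow> K z = 0"
  shows "((\<lambda>d. integral (slab i d) K / d) \<longlongrightarrow> integral (slab i 1) (\<lambda>z. K (prj i z))) (at_right 0)"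
proof -
  define a' where "a' = (\<chi> j. if j = i then -1 else a $ j)"
  define b' where "b' = (\<chi> j. if j = i then 0 else b $ j)"
  define S' where "S' = slab i 1 \<inter> cbox a' b'"
  have S'sub: "S' \<subseteq> cbox a' b'" by (auto simp: S'_def)
  have S'meas: "S' \<in> sets lebesgue" unfolding S'_def
    using slab_sets[of i 1] borel_closed[OF closed_cbox[of a' b']] by (simp add: sets.Int)
  have S'lm: "S' \<in> lmeasurable"
    using bounded_set_imp_lmeasurable[OF bounded_subset[OF bounded_cbox S'sub] S'meas] .
  define M where "M = measure lebesgue S'"
  have M0: "M \<ge> 0" by (simp add: M_def)
  have inbox: "z \<in> cbox a' b'" if "z \<in> slab i 1" "w \<in> cbox a b" "\<And>j. j \<noteq> i \<Longrightarrow> w $ j = z $ j" for z w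
  proof -
    have "a' $ j \<le> z $ j \<and> z $ j \<le> b' $ j" for j
    proof (cases "j = i")
      case True then show ?thesis using that(1) by (simp add: a'_def b'_def slab_def)
    next
      case False
      have "a $ j \<le> w $ j \<and> w $ j \<le> b $ j"
        using that(2) unfolding mem_box_cart by blast
      moreover have "w $ j = z $ j" using that(3) False by blast
      ultimately have "a $ j \<le> z $ j \<and> z $ j \<le> b $ j" by simp
      then show ?thesis using False by (simp add: a'_def b'_def)
    qed
    then show ?thesis by (simp add: mem_box_cart)
  qed
  have zero1: "K (sc i d z) = 0" if "z \<in> slab i 1" "z \<notin> cbox a' b'" for d z
    using inbox[where w="sc i d z", OF that(1)] that(2) sK by (auto simp: sc_nth)
  have zero2: "K (prj i z) = 0" if "z \<in> slab i 1" "z \<notin> cbox a' b'" for z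
    using inbox[where w="prj i z", OF that(1)] that(2) sK by (auto simp: prj_nth)
  have restr: "integral (slab i 1) f = integral S' f" if "\<And>z. z \<in> slab i 1 \<Longrightarrow> z \<notin> cbox a' b' \<Longrightarrow> f z = 0" for f :: "real^'m::{finite,wellorder} \<Rightarrow> real"
  proof -
    have "integral (slab i 1) f = integral (slab i 1) (\<lambda>x. if x \<in> cbox a' b' then f x else 0)"
      by (rule integral_cong) (use that in auto)
    also have "\<dots> = integral (cbox a' b' \<inter> slab i 1) f" by (rule Henstock_Kurzweil_Integration.integral_restrict_Int)
    finally show ?thesis by (simp add: S'_def Int_commute)
  qed
  have csc: "continuous_on UNIV (\<lambda>z. K (sc i d z))" for d
    by (rule continuous_on_compose2[OF cK]) (auto simp: sc_def intro!: continuous_intros)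
  have cprj: "continuous_on UNIV (\<lambda>z. K (prj i z))"
    by (rule continuous_on_compose2[OF cK]) (auto simp: prj_def intro!: continuous_intros)
  have isc: "(\<lambda>z. K (sc i d z)) integrable_on S'" for d
    using ai_compact[OF compact_cbox continuous_on_subset[OF csc] S'meas S'sub] absolutely_integrable_on_def by blast
  have iprj: "(\<lambda>z. K (prj i z)) integrable_on S'"
    using ai_compact[OF compact_cbox continuous_on_subset[OF cprj] S'meas S'sub] absolutely_integrable_on_def by blast
  have L: "integral (slab i 1) (\<lambda>z. K (prj i z)) = integral S' (\<lambda>z. K (prj i z))"
    by (rule restr) (rule zero2)
  have F: "integral (slab i d) K / d = integral S' (\<lambda>z. K (sc i d z))" if "d > 0" for d
  proof -
    have "integral (slab i d) K / d = integral (slab i 1) (\<lambda>z. K (sc i d z))"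
      using scale_identity[where i=i, OF cK sK that] that by simp
    also have "\<dots> = integral S' (\<lambda>z. K (sc i d z))" by (rule restr) (rule zero1)
    finally show ?thesis .
  qed
  show ?thesis
    unfolding tendsto_iff
  proof (intro allI impI)
    fix e :: real assume e: "e > 0"
    define e1 where "e1 = e / (M + 1)"
    have e1: "e1 > 0" using e M0 by (simp add: e1_def)
    obtain d0 where d0: "d0 > 0" "\<And>x y. dist x y < d0 \<Longrightarrow> \<bar>K x - K y\<bar> < e1"
      using uc_support[OF cK sK e1] by blast
    show "\<forall>\<^sub>F d in at_right 0. dist (integral (slab i d) K / d) (integral (slab i 1) (\<lambda>z. K (prj i z))) < e"
      unfolding eventually_at_right_field
    proof (intro exI[of _ "min d0 1"] conjI allI impI)
      show "(0::real) < min d0 1" using d0 by simp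
      fix d :: real assume d: "0 < d" "d < min d0 1"
      have bnd: "norm (K (sc i d z) - K (prj i z)) \<le> e1" if "z \<in> S'" for z
      proof -
        have "\<bar>z $ i\<bar> \<le> 1" using that by (auto simp: S'_def slab_def)
        then have "\<bar>d * z $ i\<bar> \<le> d" using d by (simp add: abs_mult mult_left_le)
        then have "dist (sc i d z) (prj i z) < d0"
          using d by (simp add: dist_norm sc_minus_prj)
        then show ?thesis using d0(2) by fastforce
      qed
      have "norm (integral S' (\<lambda>z. K (sc i d z) - K (prj i z))) \<le> integral S' (\<lambda>z. e1)"
        by (rule integral_norm_bound_integral[OF integrable_diff[OF isc iprj] integrable_on_const[OF S'lm] bnd])
      also have "\<dots> = e1 * M" using lmeasure_integral[OF S'lm] integral_mult_right[of S' e1 "\<lambda>x. 1"]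
        by (simp add: M_def)
      also have "\<dots> < e"
      proof -
        have "e1 * M = e * (M / (M + 1))" by (simp add: e1_def)
        also have "\<dots> < e * 1" using e M0 by (intro mult_strict_left_mono) auto
        finally show ?thesis by simp
      qed
      finally have "norm (integral S' (\<lambda>z. K (sc i d z) - K (prj i z))) < e" .
      then show "dist (integral (slab i d) K / d) (integral (slab i 1) (\<lambda>z. K (prj i z))) < e"
        using F[OF d(1)] L integral_diff[OF isc iprj] by (simp add: dist_norm)
    qed
  qed
qed


lemma slab_value:
  fixes K :: "real^'m::{finite,wellorder} \<Rightarrow> real"
  assumes cK: "continuous_on UNIV K" and sK: "\<And>z. z \<notin> cbox a b \<Longrightarrow> K z = 0"
    and nn: "\<And>z. z $ i = 0 \<Longrightarrow> K z \<ge> 0"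
  shows "integral (slab i 1) (\<lambda>z. K (prj i z)) \<ge> 0"
    and "(\<exists>z0. z0 $ i = 0 \<and> K z0 > 0) \<Longrightarrow> integral (slab i 1) (\<lambda>z. K (prj i z)) > 0"
proof -
  define a' where "a' = (\<chi> j. if j = i then -1 else a $ j - 1)"
  define b' where "b' = (\<chi> j. if j = i then 0 else b $ j + 1)"
  define S' where "S' = slab i 1 \<inter> cbox a' b'"
  let ?f = "\<lambda>z. K (prj i z)"
  have S'sub: "S' \<subseteq> cbox a' b'" by (auto simp: S'_def)
  have S'meas: "S' \<in> sets lebesgue" unfolding S'_def
    using slab_sets[of i 1] borel_closed[OF closed_cbox[of a' b']] by (simp add: sets.Int)
  have cprj: "continuous_on UNIV ?f"
    by (rule continuous_on_compose2[OF cK]) (auto simp: prj_def intro!: continuous_intros)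
  have iprj: "?f integrable_on S'"
    using ai_compact[OF compact_cbox continuous_on_subset[OF cprj] S'meas S'sub] absolutely_integrable_on_def by blast
  have fnn: "?f z \<ge> 0" for z using nn[of "prj i z"] by (simp add: prj_nth)
  have zero: "?f z = 0" if "z \<in> slab i 1" "z \<notin> cbox a' b'" for z
  proof (rule ccontr)
    assume "?f z \<noteq> 0"
    then have w: "prj i z \<in> cbox a b" using sK by blast
    have "a' $ j \<le> z $ j \<and> z $ j \<le> b' $ j" for j
    proof (cases "j = i")
      case True then show ?thesis using that(1) by (simp add: a'_def b'_def slab_def)
    next
      case False
      have "a $ j \<le> prj i z $ j \<and> prj i z $ j \<le> b $ j" using w unfolding mem_box_cart by blast
      then show ?thesis using False by (simp add: a'_def b'_def prj_nth)
    qed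
    then have "z \<in> cbox a' b'" by (simp add: mem_box_cart)
    then show False using that(2) by blast
  qed
  have restr: "integral (slab i 1) ?f = integral S' ?f"
  proof -
    have "integral (slab i 1) ?f = integral (slab i 1) (\<lambda>x. if x \<in> cbox a' b' then ?f x else 0)"
      by (rule integral_cong) (use zero in auto)
    also have "\<dots> = integral (cbox a' b' \<inter> slab i 1) ?f"
      by (rule Henstock_Kurzweil_Integration.integral_restrict_Int)
    finally show ?thesis by (simp add: S'_def Int_commute)
  qed
  show "integral (slab i 1) ?f \<ge> 0"
    unfolding restr by (rule integral_nonneg[OF iprj]) (use fnn in auto)
  assume "\<exists>z0. z0 $ i = 0 \<and> K z0 > 0"
  then obtain z0 where z0: "z0 $ i = 0" "K z0 > 0" by blast
  have z0box: "z0 \<in> cbox a b" using z0(2) sK by force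
  define z1 where "z1 = z0 - (1/2) *\<^sub>R axis i 1"
  have pz1: "prj i z1 = z0" using z0(1) by (simp add: vec_eq_iff prj_nth z1_def axis_def)
  define c where "c = K z0 / 2"
  have c: "c > 0" using z0(2) by (simp add: c_def)
  have "continuous (at z1) ?f" using cprj by (simp add: continuous_on_eq_continuous_at)
  then obtain r where r: "r > 0" "\<And>z. dist z z1 < r \<Longrightarrow> dist (?f z) (?f z1) < c"
    unfolding continuous_at_eps_delta using c by blast
  define r' where "r' = min r (1/2)"
  have r': "r' > 0" "r' \<le> r" "r' \<le> 1/2" using r by (auto simp: r'_def)
  have ballsub: "ball z1 r' \<subseteq> S'"
  proof
    fix z assume z: "z \<in> ball z1 r'"
    have cj: "\<bar>z $ j - z1 $ j\<bar> < r'" for j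
    proof -
      have "\<bar>z $ j - z1 $ j\<bar> = \<bar>(z - z1) $ j\<bar>" by simp
      also have "\<dots> \<le> norm (z - z1)" by (rule component_le_norm_cart)
      also have "\<dots> < r'" using z by (simp add: dist_norm norm_minus_commute)
      finally show ?thesis .
    qed
    have z1i: "z1 $ i = -1/2" using z0(1) by (simp add: z1_def)
    have z1j: "z1 $ j = z0 $ j" if "j \<noteq> i" for j using that by (simp add: z1_def axis_def)
    have "z $ i > -1" "z $ i \<le> 0" using cj[of i] z1i r' by auto
    then have "z \<in> slab i 1" by (simp add: slab_def)
    moreover have "a' $ j \<le> z $ j \<and> z $ j \<le> b' $ j" for j
    proof (cases "j = i")
      case True then show ?thesis using \<open>z $ i > -1\<close> \<open>z $ i \<le> 0\<close> by (simp add: a'_def b'_def)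
    next
      case False
      have "a $ j \<le> z0 $ j \<and> z0 $ j \<le> b $ j" using z0box unfolding mem_box_cart by blast
      then show ?thesis using False cj[of j] z1j[OF False] r' by (auto simp: a'_def b'_def)
    qed
    then have "z \<in> cbox a' b'" by (simp add: mem_box_cart)
    ultimately show "z \<in> S'" by (simp add: S'_def)
  qed
  have ib: "?f integrable_on ball z1 r'"
  proof -
    have "?f absolutely_integrable_on ball z1 r'"
      by (rule ai_compact[OF compact_cball[of z1 r'] continuous_on_subset[OF cprj]]) (auto simp: borel_open)
    then show ?thesis using absolutely_integrable_on_def by blast
  qed
  have lb: "c \<le> ?f z" if "z \<in> ball z1 r'" for z
  proof -
    have "dist z z1 < r" using that r' by (simp add: dist_commute)
    then have "dist (?f z) (?f z1) < c" using r(2) by blast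
    then have "\<bar>K (prj i z) - K z0\<bar> < K z0 / 2" using pz1 by (simp add: c_def dist_real_def)
    then show ?thesis unfolding c_def by linarith
  qed
  have lmb: "ball z1 r' \<in> lmeasurable" by simp
  have "c * measure lebesgue (ball z1 r') = integral (ball z1 r') (\<lambda>z. c)"
    using lmeasure_integral[OF lmb] integral_mult_right[of "ball z1 r'" c "\<lambda>x. 1"] by simp
  also have "\<dots> \<le> integral (ball z1 r') ?f"
    by (rule integral_le[OF integrable_on_const[OF lmb] ib]) (use lb in auto)
  also have "\<dots> \<le> integral S' ?f"
    by (rule integral_subset_le[OF ballsub ib iprj]) (use fnn in auto)
  finally have "c * measure lebesgue (ball z1 r') \<le> integral S' ?f" .
  moreover have "measure lebesgue (ball z1 r') > 0" using content_ball_pos[OF r'(1)] by simp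
  ultimately show "integral (slab i 1) ?f > 0" using c restr
    by (smt (verit) mult_pos_pos)
qed

definition chartmap :: "(real^'m::finite \<Rightarrow> real) \<Rightarrow> 'm \<Rightarrow> real^'m \<Rightarrow> real^'m" where
  "chartmap \<psi> i y = y + (\<psi> y - y $ i) *\<^sub>R axis i 1"

definition chartder :: "(real^'m::finite \<Rightarrow> real^'m) \<Rightarrow> 'm \<Rightarrow> real^'m \<Rightarrow> real^'m \<Rightarrow> real^'m" where
  "chartder gr i y h = h + (gr y \<bullet> h - h $ i) *\<^sub>R axis i 1"

lemma chartmap_nth: "chartmap \<psi> i y $ j = (if j = i then \<psi> y else y $ j)"
  by (simp add: chartmap_def axis_def)

lemma chartder_nth: "chartder gr i y h $ j = (if j = i then gr y \<bullet> h else h $ j)"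
  by (simp add: chartder_def axis_def)

lemma chartmap_deriv:
  assumes "(\<psi> has_derivative (\<lambda>h. gr y \<bullet> h)) (at y)"
  shows "(chartmap \<psi> i has_derivative chartder gr i y) (at y)"
proof -
  have "((\<lambda>y. y $ i) has_derivative (\<lambda>h. h $ i)) (at y)"
    by (rule bounded_linear_imp_has_derivative) (rule bounded_linear_vec_nth)
  then have "((\<lambda>y. y + (\<psi> y - y $ i) *\<^sub>R axis i 1) has_derivative
        (\<lambda>h. h + (gr y \<bullet> h - h $ i) *\<^sub>R axis i 1)) (at y)"
    by (auto intro!: derivative_eq_intros assms)
  then show ?thesis unfolding chartmap_def[abs_def] chartder_def[abs_def] .
qed

lemma linear_chartder: "linear (chartder gr i y)"
  by (rule linearI) (simp_all add: chartder_def algebra_simps inner_add_right)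

lemma inj_chartder:
  assumes "gr y $ i \<noteq> 0" shows "inj (chartder gr i y)"
proof -
  have "h = 0" if h: "chartder gr i y h = 0" for h
  proof -
    have hj: "h $ j = 0" if "j \<noteq> i" for j
      using arg_cong[OF h, of "\<lambda>v. v $ j"] that by (simp add: chartder_nth)
    have "gr y \<bullet> h = 0" using arg_cong[OF h, of "\<lambda>v. v $ i"] by (simp add: chartder_nth)
    moreover have "gr y \<bullet> h = gr y $ i * h $ i"
    proof -
      have "gr y \<bullet> h = (\<Sum>j\<in>UNIV. gr y $ j * h $ j)" by (simp add: inner_vec_def)
      also have "\<dots> = (\<Sum>j\<in>UNIV. if j = i then gr y $ i * h $ i else 0)"
        by (intro sum.cong) (auto simp: hj)
      also have "\<dots> = gr y $ i * h $ i" by simp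
      finally show ?thesis .
    qed
    ultimately have "h $ i = 0" using assms by simp
    then show "h = 0" using hj by (simp add: vec_eq_iff) (metis)
  qed
  then show ?thesis
    using linear_chartder[of gr i y] by (simp add: linear_injective_0)
qed

lemma det_chartder_nz:
  assumes "gr y $ i \<noteq> 0" shows "det (matrix (chartder gr i y)) \<noteq> 0"
  using det_nz_iff_inj[OF linear_chartder[of gr i y]] inj_chartder[of gr y i, OF assms] by blast

lemma continuous_on_det:
  fixes M :: "'a::topological_space \<Rightarrow> real^'m::finite^'m"
  assumes "\<And>a b. continuous_on S (\<lambda>y. M y $ a $ b)"
  shows "continuous_on S (\<lambda>y. det (M y))"
  unfolding det_def by (intro continuous_intros assms)

lemma continuous_on_det_chartder:
  assumes "continuous_on S gr"
  shows "continuous_on S (\<lambda>y. det (matrix (chartder gr i y)))"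
proof (rule continuous_on_det)
  fix a b
  have eq: "(\<lambda>y. matrix (chartder gr i y) $ a $ b) = (\<lambda>y. if a = i then gr y $ b else axis b 1 $ a)"
    by (auto simp: fun_eq_iff matrix_def chartder_nth inner_axis)
  have "continuous_on S (\<lambda>y. gr y $ b)" by (intro continuous_intros assms)
  then have "continuous_on S (\<lambda>y. if a = i then gr y $ b else axis b 1 $ a)"
    by (cases "a = i") (simp_all add: continuous_on_const)
  then show "continuous_on S (\<lambda>y. matrix (chartder gr i y) $ a $ b)" unfolding eq .
qed


lemma inj_chartmap:
  fixes \<psi> :: "real^'m::finite \<Rightarrow> real"
  assumes d\<psi>: "\<And>y. (\<psi> has_derivative (\<lambda>h. gr y \<bullet> h)) (at y)"
    and C: "convex C" and nz: "\<And>y. y \<in> C \<Longrightarrow> gr y $ i \<noteq> 0"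
  shows "inj_on (chartmap \<psi> i) C"
proof (rule inj_onI)
  fix y1 y2 assume y1: "y1 \<in> C" and y2: "y2 \<in> C" and eq: "chartmap \<psi> i y1 = chartmap \<psi> i y2"
  have j: "y1 $ j = y2 $ j" if "j \<noteq> i" for j
    using arg_cong[OF eq, of "\<lambda>v. v $ j"] that by (simp add: chartmap_nth)
  have ps: "\<psi> y1 = \<psi> y2" using arg_cong[OF eq, of "\<lambda>v. v $ i"] by (simp add: chartmap_nth)
  define t where "t = y2 $ i - y1 $ i"
  have y2eq: "y2 = y1 + t *\<^sub>R axis i 1"
    by (auto simp: vec_eq_iff t_def axis_def j)
  show "y1 = y2"
  proof (rule ccontr)
    assume ne: "y1 \<noteq> y2"
    then have t0: "t \<noteq> 0" using y2eq by auto
    define f where "f u = \<psi> (y1 + (u * t) *\<^sub>R axis i 1)" for u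
    have fd: "(f has_real_derivative t * (gr (y1 + (u * t) *\<^sub>R axis i 1) $ i)) (at u)" for u
    proof -
      let ?p = "y1 + (u * t) *\<^sub>R axis i 1"
      have "((\<lambda>u. y1 + (u * t) *\<^sub>R axis i 1) has_derivative (\<lambda>v. (v * t) *\<^sub>R axis i 1)) (at u)"
        by (auto intro!: derivative_eq_intros)
      from has_derivative_compose[OF this d\<psi>[of ?p]]
      have "(f has_derivative (\<lambda>v. gr ?p \<bullet> ((v * t) *\<^sub>R axis i 1))) (at u)"
        unfolding f_def by simp
      moreover have "(\<lambda>v. gr ?p \<bullet> ((v * t) *\<^sub>R axis i 1)) = (*) (t * (gr ?p $ i))"
        by (auto simp: fun_eq_iff inner_axis)
      ultimately show ?thesis by (simp add: has_field_derivative_def)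
    qed
    obtain z where z: "0 < z" "z < 1" "f 1 - f 0 = (1 - 0) * (t * (gr (y1 + (z * t) *\<^sub>R axis i 1) $ i))"
      using MVT2[of 0 1 f "\<lambda>u. t * (gr (y1 + (u * t) *\<^sub>R axis i 1) $ i)"] fd by force
    have "f 1 = f 0" using ps y2eq by (simp add: f_def)
    then have "t * (gr (y1 + (z * t) *\<^sub>R axis i 1) $ i) = 0" using z(3) by simp
    moreover have "y1 + (z * t) *\<^sub>R axis i 1 \<in> C"
    proof -
      have "(1 - z) *\<^sub>R y1 + z *\<^sub>R y2 \<in> C" by (rule convexD[OF C y1 y2]) (use z in auto)
      moreover have "(1 - z) *\<^sub>R y1 + z *\<^sub>R y2 = y1 + (z * t) *\<^sub>R axis i 1"
        by (simp add: y2eq algebra_simps)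
      ultimately show ?thesis by simp
    qed
    ultimately show False using nz t0 by auto
  qed
qed


lemma chart:
  fixes \<psi> :: "real^'m::{finite,wellorder} \<Rightarrow> real" and gr :: "real^'m::_ \<Rightarrow> real^'m::_"
    and F :: "real^'m::_ \<Rightarrow> real"
  assumes d\<psi>: "\<And>y. (\<psi> has_derivative (\<lambda>h. gr y \<bullet> h)) (at y)"
    and cgr: "continuous_on UNIV gr"
    and rs: "0 < s" "s < r"
    and nz: "\<And>y. y \<in> cball c r \<Longrightarrow> gr y $ i \<noteq> 0"
    and cF: "continuous_on UNIV F"
    and sF: "\<And>y. y \<notin> cball c s \<Longrightarrow> F y = 0"
  shows "\<exists>K. continuous_on UNIV K \<and> (\<exists>a b. \<forall>z. z \<notin> cbox a b \<longrightarrow> K z = 0) \<and>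
     (\<forall>d>0. integral {y. - d < \<psi> y \<and> \<psi> y \<le> 0} F = integral (slab i d) K) \<and>
     ((\<forall>y. \<psi> y = 0 \<longrightarrow> F y \<ge> 0) \<longrightarrow> (\<forall>z. z $ i = 0 \<longrightarrow> K z \<ge> 0)) \<and>
     (\<forall>y. \<psi> y = 0 \<and> F y > 0 \<longrightarrow> (\<exists>z. z $ i = 0 \<and> K z > 0))"
proof -
  let ?\<Phi> = "chartmap \<psi> i"
  let ?D = "\<lambda>y. det (matrix (chartder gr i y))"
  have c\<psi>: "continuous_on UNIV \<psi>"
    using d\<psi> has_derivative_continuous continuous_at_imp_continuous_on by blast
  have c\<Phi>: "continuous_on UNIV ?\<Phi>"
    unfolding chartmap_def[abs_def] by (intro continuous_intros c\<psi>)
  have d\<Phi>: "(?\<Phi> has_derivative chartder gr i y) (at y)" for y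
    by (rule chartmap_deriv[OF d\<psi>])
  have injC: "inj_on ?\<Phi> (cball c r)"
    by (rule inj_chartmap[OF d\<psi> convex_cball nz])
  define Om where "Om = ?\<Phi> ` ball c r"
  have Oopen: "open Om" unfolding Om_def
    by (rule invariance_of_domain[OF continuous_on_subset[OF c\<Phi>] open_ball inj_on_subset[OF injC ball_subset_cball]]) simp
  define \<Psi> where "\<Psi> = inv_into (cball c r) ?\<Phi>"
  have \<Psi>\<Phi>: "\<Psi> (?\<Phi> y) = y" if "y \<in> cball c r" for y
    unfolding \<Psi>_def using inv_into_f_f[OF injC that] .
  have c\<Psi>: "continuous_on (?\<Phi> ` cball c r) \<Psi>"
    by (rule continuous_on_inv[OF continuous_on_subset[OF c\<Phi>] compact_cball]) (use \<Psi>\<Phi> in auto)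
  have \<Psi>Om: "\<Psi> z \<in> ball c r \<and> ?\<Phi> (\<Psi> z) = z" if zO: "z \<in> Om" for z
  proof -
    obtain y where y: "y \<in> ball c r" "z = ?\<Phi> y" using zO Om_def by blast
    then have "\<Psi> z = y" using \<Psi>\<Phi>[of y] by auto
    then show ?thesis using y by simp
  qed
  have OsubC: "Om \<subseteq> ?\<Phi> ` cball c r" unfolding Om_def by auto
  have cD: "continuous_on UNIV ?D" by (rule continuous_on_det_chartder[OF cgr])
  have Dnz: "?D y \<noteq> 0" if "y \<in> cball c r" for y using det_chartder_nz[of gr y i] nz[OF that] by blast
  define K where "K z = (if z \<in> Om then F (\<Psi> z) / \<bar>?D (\<Psi> z)\<bar> else 0)" for z
  have sub_s: "cball c s \<subseteq> ball c r" using rs by (auto simp: subset_eq)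
  have K\<Phi>: "K (?\<Phi> y) = F y / \<bar>?D y\<bar>" if "y \<in> ball c r" for y
  proof -
    have "?\<Phi> y \<in> Om" using that Om_def by blast
    moreover have "\<Psi> (?\<Phi> y) = y" using \<Psi>\<Phi> that by auto
    ultimately show ?thesis by (simp add: K_def)
  qed
  have Kzero: "K z = 0" if "z \<notin> ?\<Phi> ` cball c s" for z
  proof (cases "z \<in> Om")
    case True
    have "\<Psi> z \<notin> cball c s"
    proof
      assume "\<Psi> z \<in> cball c s"
      then have "?\<Phi> (\<Psi> z) \<in> ?\<Phi> ` cball c s" by blast
      then show False using \<Psi>Om[OF True] that by simp
    qed
    then show ?thesis using sF by (simp add: K_def)
  qed (simp add: K_def)
  have compS: "compact (?\<Phi> ` cball c s)"
    by (rule compact_continuous_image[OF continuous_on_subset[OF c\<Phi>] compact_cball]) simp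
  have cK: "continuous_on UNIV K"
  proof -
    have c\<Psi>Om: "continuous_on Om \<Psi>" using continuous_on_subset[OF c\<Psi> OsubC] .
    have \<Psi>Oc: "\<Psi> ` Om \<subseteq> cball c r" using \<Psi>Om ball_subset_cball by blast
    have cF\<Psi>: "continuous_on Om (\<lambda>z. F (\<Psi> z))"
      using continuous_on_compose2[OF cF c\<Psi>Om] by simp
    have cD\<Psi>: "continuous_on Om (\<lambda>z. \<bar>?D (\<Psi> z)\<bar>)"
      using continuous_on_compose2[OF cD c\<Psi>Om] by (intro continuous_intros) simp
    have "continuous_on Om (\<lambda>z. F (\<Psi> z) / \<bar>?D (\<Psi> z)\<bar>)"
      by (rule continuous_on_divide[OF cF\<Psi> cD\<Psi>]) (use \<Psi>Om Dnz in force)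
    then have c1: "continuous_on Om K"
      by (rule continuous_on_cong[THEN iffD1, rotated 2]) (simp_all add: K_def)
    have c2: "continuous_on (- (?\<Phi> ` cball c s)) K"
      by (rule continuous_on_cong[THEN iffD1, OF refl _ continuous_on_const[of _ 0]]) (use Kzero in auto)
    have o2: "open (- (?\<Phi> ` cball c s))" using compS compact_imp_closed by blast
    have "Om \<union> - (?\<Phi> ` cball c s) = UNIV"
    proof -
      have "?\<Phi> ` cball c s \<subseteq> Om" unfolding Om_def using sub_s by blast
      then show ?thesis by blast
    qed
    then show ?thesis using continuous_on_open_Un[OF Oopen o2 c1 c2] by simp
  qed
  obtain a where a: "?\<Phi> ` cball c s \<subseteq> cbox (-a) a"
    using bounded_subset_cbox_symmetric[OF compact_imp_bounded[OF compS]] by blast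
  have Kbox: "K z = 0" if "z \<notin> cbox (-a) a" for z using a that Kzero by blast
  have I: "integral {y. - d < \<psi> y \<and> \<psi> y \<le> 0} F = integral (slab i d) K" if d: "d > 0" for d
  proof -
    define L where "L = {y. - d < \<psi> y \<and> \<psi> y \<le> 0}"
    define S where "S = ball c r \<inter> L"
    have "L = {y. - d < \<psi> y} \<inter> {y. \<psi> y \<le> 0}" by (auto simp: L_def)
    moreover have "open {y. - d < \<psi> y}"
      using c\<psi> open_Collect_less[of "\<lambda>_. - d" \<psi>] by (simp add: continuous_on_eq_continuous_at)
    moreover have "closed {y. \<psi> y \<le> 0}"
      using c\<psi> closed_Collect_le[of \<psi> "\<lambda>_. 0"] by (simp add: continuous_on_eq_continuous_at)
    ultimately have Lmeas: "L \<in> sets lebesgue" by (simp add: borel_open borel_closed sets.Int)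
    have Smeas: "S \<in> sets lebesgue" unfolding S_def using Lmeas by (simp add: borel_open sets.Int)
    have e1: "integral L F = integral S F"
    proof -
      have "integral L F = integral L (\<lambda>x. if x \<in> ball c r then F x else 0)"
      proof (rule integral_cong)
        fix x
        show "F x = (if x \<in> ball c r then F x else 0)"
        proof (cases "x \<in> ball c r")
          case False
          then have "x \<notin> cball c s" using sub_s by blast
          then show ?thesis using sF False by simp
        qed simp
      qed
      also have "\<dots> = integral S F" unfolding S_def
        by (rule Henstock_Kurzweil_Integration.integral_restrict_Int)
      finally show ?thesis .
    qed
    have e2: "integral S F = integral S (\<lambda>x. \<bar>?D x\<bar> * K (?\<Phi> x))"
    proof (rule integral_cong)
      fix x assume "x \<in> S"
      then have x: "x \<in> ball c r" by (simp add: S_def)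
      have "?D x \<noteq> 0" using Dnz x by auto
      then show "F x = \<bar>?D x\<bar> * K (?\<Phi> x)" using K\<Phi>[OF x] by simp
    qed
    have imgS: "?\<Phi> ` S = Om \<inter> slab i d"
    proof
      show "?\<Phi> ` S \<subseteq> Om \<inter> slab i d"
        by (auto simp: S_def L_def Om_def slab_def chartmap_nth)
      show "Om \<inter> slab i d \<subseteq> ?\<Phi> ` S"
      proof
        fix z assume z: "z \<in> Om \<inter> slab i d"
        then have y: "\<Psi> z \<in> ball c r" "?\<Phi> (\<Psi> z) = z" using \<Psi>Om by auto
        have "\<psi> (\<Psi> z) = z $ i" using arg_cong[OF y(2), of "\<lambda>v. v $ i"] by (simp add: chartmap_nth)
        then have "\<Psi> z \<in> S" using y(1) z by (simp add: S_def L_def slab_def)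
        then show "z \<in> ?\<Phi> ` S" using y(2) by force
      qed
    qed
    have OSm: "Om \<inter> slab i d \<in> sets lebesgue"
      by (rule sets.Int[OF _ slab_sets]) (use Oopen in \<open>simp add: borel_open\<close>)
    have Kai: "K absolutely_integrable_on (?\<Phi> ` S)"
      unfolding imgS by (rule ai_support[where a="-a" and b=a, OF cK Kbox OSm])
    have "S \<subseteq> cball c r" unfolding S_def using ball_subset_cball by blast
    then have injS: "inj_on ?\<Phi> S" using inj_on_subset[OF injC] by blast
    have e3: "integral S (\<lambda>x. \<bar>?D x\<bar> * K (?\<Phi> x)) = integral (?\<Phi> ` S) K"
      by (rule cov_real[OF Smeas _ injS Kai]) (rule has_derivative_at_withinI[OF d\<Phi>])
    have e4: "integral (Om \<inter> slab i d) K = integral (slab i d) K"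
    proof -
      have "integral (slab i d) K = integral (slab i d) (\<lambda>x. if x \<in> Om then K x else 0)"
        by (rule integral_cong) (simp add: K_def)
      also have "\<dots> = integral (Om \<inter> slab i d) K"
        by (rule Henstock_Kurzweil_Integration.integral_restrict_Int)
      finally show ?thesis by simp
    qed
    show ?thesis using e1 e2 e3 e4 imgS by (simp add: L_def)
  qed
  have nonneg: "\<forall>z. z $ i = 0 \<longrightarrow> K z \<ge> 0" if hF: "\<forall>y. \<psi> y = 0 \<longrightarrow> F y \<ge> 0"
  proof (intro allI impI)
    fix z assume zi: "(z::real^_) $ i = 0"
    show "K z \<ge> 0"
    proof (cases "z \<in> Om")
      case True
      then have y: "\<Psi> z \<in> ball c r" "?\<Phi> (\<Psi> z) = z" using \<Psi>Om by auto
      have "\<psi> (\<Psi> z) = 0" using arg_cong[OF y(2), of "\<lambda>v. v $ i"] zi by (simp add: chartmap_nth)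
      then have "F (\<Psi> z) \<ge> 0" using hF by blast
      then show ?thesis using True by (simp add: K_def)
    qed (simp add: K_def)
  qed
  have pos: "\<forall>y. \<psi> y = 0 \<and> F y > 0 \<longrightarrow> (\<exists>z. z $ i = 0 \<and> K z > 0)"
  proof (intro allI impI)
    fix y assume y: "\<psi> y = 0 \<and> F y > 0"
    then have yb: "y \<in> ball c r" using sF sub_s by force
    have "?D y \<noteq> 0" using Dnz yb by auto
    then have "K (?\<Phi> y) > 0" using K\<Phi>[OF yb] y by simp
    moreover have "?\<Phi> y $ i = 0" using y by (simp add: chartmap_nth)
    ultimately show "\<exists>z. z $ i = 0 \<and> K z > 0" by blast
  qed
  have nonneg': "(\<forall>y. \<psi> y = 0 \<longrightarrow> F y \<ge> 0) \<longrightarrow> (\<forall>z. z $ i = 0 \<longrightarrow> K z \<ge> 0)"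
    using nonneg by blast
  show ?thesis using cK Kbox I nonneg' pos by blast
qed

lemma layer_sets:
  fixes \<psi> :: "'a::euclidean_space \<Rightarrow> real"
  assumes "continuous_on UNIV \<psi>"
  shows "{y. - d < \<psi> y \<and> \<psi> y \<le> 0} \<in> sets lebesgue"
proof -
  have "{y. - d < \<psi> y \<and> \<psi> y \<le> 0} = {y. - d < \<psi> y} \<inter> {y. \<psi> y \<le> 0}" by auto
  moreover have "open {y. - d < \<psi> y}"
    using assms open_Collect_less[of "\<lambda>_. - d" \<psi>] by (simp add: continuous_on_eq_continuous_at)
  moreover have "closed {y. \<psi> y \<le> 0}"
    using assms closed_Collect_le[of \<psi> "\<lambda>_. 0"] by (simp add: continuous_on_eq_continuous_at)
  ultimately show ?thesis by (simp add: borel_open borel_closed sets.Int)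
qed

lemma cont_cutoff:
  fixes \<rho> H :: "'a::metric_space \<Rightarrow> real"
  assumes "continuous_on UNIV \<rho>" "continuous_on W H" "open W" "cball x s \<subseteq> W"
    "\<And>y. y \<notin> cball x s \<Longrightarrow> \<rho> y = 0"
  shows "continuous_on UNIV (\<lambda>y. \<rho> y * H y)"
proof -
  have c1: "continuous_on W (\<lambda>y. \<rho> y * H y)"
    by (intro continuous_intros continuous_on_subset[OF assms(1)] assms(2)) auto
  have c2: "continuous_on (- cball x s) (\<lambda>y. \<rho> y * H y)"
    by (rule continuous_on_cong[THEN iffD1, OF refl _ continuous_on_const[of _ 0]]) (use assms(5) in auto)
  have "W \<union> - cball x s = UNIV" using assms(4) by blast
  moreover have "open (- cball x s)" by auto
  ultimately show ?thesis using continuous_on_open_Un[OF assms(3) _ c1 c2] by simp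
qed

lemma local_data:
  fixes gr :: "real^'m::finite \<Rightarrow> real^'m"
  assumes cgr: "continuous_on UNIV gr" and nz: "gr x0 \<noteq> 0" and W: "open W" "x0 \<in> W"
  shows "\<exists>i r. r > 0 \<and> cball x0 r \<subseteq> W \<and> (\<forall>y\<in>cball x0 r. gr y $ i \<noteq> 0)"
proof -
  obtain i where i: "gr x0 $ i \<noteq> 0" using nz by (auto simp: vec_eq_iff)
  have "continuous (at x0) (\<lambda>y. gr y $ i)"
    using cgr by (simp add: continuous_on_eq_continuous_at continuous_intros)
  then obtain r1 where r1: "r1 > 0" "\<And>y. dist y x0 < r1 \<Longrightarrow> dist (gr y $ i) (gr x0 $ i) < \<bar>gr x0 $ i\<bar>"
    unfolding continuous_at_eps_delta using i by (meson zero_less_abs_iff)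
  obtain r2 where r2: "r2 > 0" "ball x0 r2 \<subseteq> W" using W open_contains_ball by blast
  define r where "r = min r1 r2 / 2"
  have r: "r > 0" "r < r1" "r < r2" using r1 r2 by (auto simp: r_def)
  show ?thesis
  proof (intro exI conjI ballI)
    show "r > 0" by (fact r(1))
    have "cball x0 r \<subseteq> ball x0 r2"
    proof
      fix y assume "y \<in> cball x0 r" then show "y \<in> ball x0 r2" using r(3) by simp
    qed
    then show "cball x0 r \<subseteq> W" using r2(2) by blast
    fix y assume "y \<in> cball x0 r"
    then have "dist y x0 < r1" using r by (simp add: dist_commute)
    then have "dist (gr y $ i) (gr x0 $ i) < \<bar>gr x0 $ i\<bar>" by (rule r1(2))
    then show "gr y $ i \<noteq> 0" by (auto simp: dist_real_def)
  qed
qed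


lemma partition_data:
  fixes \<psi> :: "'a::euclidean_space \<Rightarrow> real" and ss :: "'a \<Rightarrow> real"
  assumes c\<psi>: "continuous_on UNIV \<psi>" and comp: "compact {y. \<psi> y \<le> 0}"
    and T: "finite T" and ssp: "\<And>x. x \<in> T \<Longrightarrow> ss x > 0"
    and cov: "{y. \<psi> y = 0} \<subseteq> (\<Union>x\<in>T. ball x (ss x))" and ne: "{y. \<psi> y = 0} \<noteq> {}"
  obtains \<rho> :: "'a \<Rightarrow> 'a \<Rightarrow> real" and d0 :: real where "\<And>x. continuous_on UNIV (\<rho> x)" "\<And>x y. \<rho> x y \<ge> 0"
    "\<And>x y. y \<notin> cball x (ss x) \<Longrightarrow> \<rho> x y = 0"
    "\<And>x y. x \<in> T \<Longrightarrow> y \<in> ball x (ss x) \<Longrightarrow> \<rho> x y > 0"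
    "d0 > 0" "\<And>y. - d0 < \<psi> y \<Longrightarrow> \<psi> y \<le> 0 \<Longrightarrow> (\<Sum>x\<in>T. \<rho> x y) = 1"
proof -
  define \<Gamma> where "\<Gamma> = {y. \<psi> y = 0}"
  have "closed \<Gamma>" unfolding \<Gamma>_def by (rule closed_Collect_eq[OF c\<psi> continuous_on_const])
  moreover have "\<Gamma> = {y. \<psi> y \<le> 0} \<inter> \<Gamma>" by (auto simp: \<Gamma>_def)
  ultimately have \<Gamma>c: "compact \<Gamma>" using compact_Int_closed[OF comp] by metis
  define num where "num x y = max 0 (ss x - dist y x)" for x y
  define Sm where "Sm y = (\<Sum>x\<in>T. num x y)" for y
  have cnum: "continuous_on UNIV (num x)" for x unfolding num_def by (intro continuous_intros)
  have cSm: "continuous_on UNIV Sm" unfolding Sm_def by (intro continuous_intros cnum)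
  have num_nn: "num x y \<ge> 0" for x y by (simp add: num_def)
  have num_pos: "num x y > 0" if "y \<in> ball x (ss x)" for x y using that by (simp add: num_def dist_commute)
  have num_zero: "num x y = 0" if "y \<notin> cball x (ss x)" for x y using that by (simp add: num_def dist_commute)
  have Sm\<Gamma>: "Sm y > 0" if yG: "y \<in> \<Gamma>" for y
  proof -
    have "y \<in> {y. \<psi> y = 0}" using yG by (simp add: \<Gamma>_def)
    then have "y \<in> (\<Union>x\<in>T. ball x (ss x))" using cov by blast
    then obtain x where x: "x \<in> T" "y \<in> ball x (ss x)" by blast
    show ?thesis unfolding Sm_def
      by (rule sum_pos2[where f="\<lambda>x. num x y", OF T x(1) num_pos[OF x(2)]]) (rule num_nn)
  qed
  obtain y0 where y0: "y0 \<in> \<Gamma>" "\<And>y. y \<in> \<Gamma> \<Longrightarrow> Sm y0 \<le> Sm y"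
    using continuous_attains_inf[OF \<Gamma>c _ continuous_on_subset[OF cSm]] ne by (auto simp: \<Gamma>_def)
  define \<eta> where "\<eta> = Sm y0 / 2"
  have \<eta>: "\<eta> > 0" using Sm\<Gamma>[OF y0(1)] by (simp add: \<eta>_def)
  define \<rho> where "\<rho> x y = num x y / max (Sm y) \<eta>" for x y
  have c\<rho>: "continuous_on UNIV (\<rho> x)" for x
    unfolding \<rho>_def[abs_def] using \<eta> by (intro continuous_intros cnum cSm) auto
  have \<rho>nn: "\<rho> x y \<ge> 0" for x y using num_nn \<eta> by (simp add: \<rho>_def)
  have \<rho>z: "\<rho> x y = 0" if "y \<notin> cball x (ss x)" for x y using num_zero[OF that] by (simp add: \<rho>_def)
  have \<rho>p: "\<rho> x y > 0" if "y \<in> ball x (ss x)" for x y using num_pos[OF that] \<eta> by (simp add: \<rho>_def)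
  have \<rho>sum: "(\<Sum>x\<in>T. \<rho> x y) = 1" if "Sm y > \<eta>" for y
  proof -
    have "(\<Sum>x\<in>T. \<rho> x y) = Sm y / max (Sm y) \<eta>" by (simp add: \<rho>_def Sm_def sum_divide_distrib)
    also have "\<dots> = 1" using that \<eta> by simp
    finally show ?thesis .
  qed
  define C where "C = {y. \<psi> y \<le> 0} \<inter> {y. Sm y \<le> \<eta>}"
  have "closed {y. Sm y \<le> \<eta>}" by (rule closed_Collect_le[OF cSm continuous_on_const])
  then have Cc: "compact C" unfolding C_def using compact_Int_closed[OF comp] by blast
  have Cneg: "\<psi> y < 0" if "y \<in> C" for y
  proof (rule ccontr)
    assume "\<not> \<psi> y < 0"
    then have "y \<in> \<Gamma>" using that by (auto simp: C_def \<Gamma>_def)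
    then have "Sm y \<ge> 2 * \<eta>" using y0(2) by (simp add: \<eta>_def)
    then show False using that \<eta> by (simp add: C_def)
  qed
  obtain d0 where d0: "d0 > 0" "\<And>y. y \<in> C \<Longrightarrow> \<psi> y \<le> - d0"
  proof (cases "C = {}")
    case True then show ?thesis using that[of 1] by auto
  next
    case False
    obtain ym where ym: "ym \<in> C" "\<And>y. y \<in> C \<Longrightarrow> \<psi> y \<le> \<psi> ym"
      using continuous_attains_sup[OF Cc False continuous_on_subset[OF c\<psi>]] by auto
    show ?thesis using that[of "- \<psi> ym"] Cneg[OF ym(1)] ym(2) by auto
  qed
  have lay: "(\<Sum>x\<in>T. \<rho> x y) = 1" if "- d0 < \<psi> y" "\<psi> y \<le> 0" for y
  proof -
    have "y \<notin> C" using d0(2) that(1) by force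
    then have "Sm y > \<eta>" using that(2) by (simp add: C_def)
    then show ?thesis by (rule \<rho>sum)
  qed
  show ?thesis
  proof (rule that[of \<rho> d0])
    show "\<And>x y. x \<in> T \<Longrightarrow> y \<in> ball x (ss x) \<Longrightarrow> 0 < \<rho> x y" using \<rho>p by blast
  qed (use c\<rho> \<rho>nn \<rho>z d0(1) lay in auto)
qed


lemma core:
  fixes \<psi> :: "real^'m::{finite,wellorder} \<Rightarrow> real" and gr :: "real^'m::_ \<Rightarrow> real^'m::_"
    and H :: "real^'m::_ \<Rightarrow> real"
  assumes d\<psi>: "\<And>y. (\<psi> has_derivative (\<lambda>h. gr y \<bullet> h)) (at y)"
    and cgr: "continuous_on UNIV gr"
    and comp: "compact {y. \<psi> y \<le> 0}"
    and nz: "\<And>y. \<psi> y = 0 \<Longrightarrow> gr y \<noteq> 0"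
    and W: "open W" "{y. \<psi> y \<le> 0} \<subseteq> W" and cH: "continuous_on W H"
    and Hnn: "\<And>y. \<psi> y = 0 \<Longrightarrow> H y \<ge> 0"
    and Hpos: "\<exists>y. \<psi> y = 0 \<and> H y > 0"
  shows "\<exists>L>0. ((\<lambda>d. integral {y. - d < \<psi> y \<and> \<psi> y \<le> 0} H / d) \<longlongrightarrow> L) (at_right 0)"
proof -
  have c\<psi>: "continuous_on UNIV \<psi>"
    using d\<psi> has_derivative_continuous continuous_at_imp_continuous_on by blast
  define \<Gamma> where "\<Gamma> = {y. \<psi> y = 0}"
  have "\<forall>x0\<in>\<Gamma>. \<exists>p. snd p > 0 \<and> cball x0 (snd p) \<subseteq> W \<and> (\<forall>y\<in>cball x0 (snd p). gr y $ fst p \<noteq> 0)"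
  proof
    fix x0 assume x0: "x0 \<in> \<Gamma>"
    have "x0 \<in> W" using x0 W(2) by (auto simp: \<Gamma>_def)
    moreover have "gr x0 \<noteq> 0" using nz x0 by (simp add: \<Gamma>_def)
    ultimately have "\<exists>i r. r > 0 \<and> cball x0 r \<subseteq> W \<and> (\<forall>y\<in>cball x0 r. gr y $ i \<noteq> 0)"
      using local_data[OF cgr _ W(1)] by blast
    then obtain i r where "r > 0 \<and> cball x0 r \<subseteq> W \<and> (\<forall>y\<in>cball x0 r. gr y $ i \<noteq> 0)"
      by blast
    then show "\<exists>p. snd p > 0 \<and> cball x0 (snd p) \<subseteq> W \<and> (\<forall>y\<in>cball x0 (snd p). gr y $ fst p \<noteq> 0)"
      by (intro exI[of _ "(i, r)"]) simp
  qed
  then obtain P where P: "\<And>x0. x0 \<in> \<Gamma> \<Longrightarrow> snd (P x0) > 0 \<and> cball x0 (snd (P x0)) \<subseteq> W \<and>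
      (\<forall>y\<in>cball x0 (snd (P x0)). gr y $ fst (P x0) \<noteq> 0)"
    using bchoice[of \<Gamma>] by metis
  define ii where "ii x = fst (P x)" for x
  define rr where "rr x = snd (P x)" for x
  define ss where "ss x = rr x / 2" for x
  have rrp: "rr x > 0" if "x \<in> \<Gamma>" for x using P[OF that] by (simp add: rr_def)
  have ssp: "ss x > 0" if "x \<in> \<Gamma>" for x using rrp[OF that] by (simp add: ss_def)
  have "\<Gamma> \<subseteq> (\<Union>x\<in>\<Gamma>. ball x (ss x))" using ssp by force
  moreover have "compact \<Gamma>"
  proof -
    have "closed \<Gamma>" unfolding \<Gamma>_def by (rule closed_Collect_eq[OF c\<psi> continuous_on_const])
    moreover have "\<Gamma> = {y. \<psi> y \<le> 0} \<inter> \<Gamma>" by (auto simp: \<Gamma>_def)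
    ultimately show ?thesis using compact_Int_closed[OF comp] by metis
  qed
  ultimately obtain T where T: "T \<subseteq> \<Gamma>" "finite T" "\<Gamma> \<subseteq> (\<Union>x\<in>T. ball x (ss x))"
    using compactE_image[of \<Gamma> \<Gamma> "\<lambda>x. ball x (ss x)"] by blast
  obtain ys where ys: "\<psi> ys = 0" "H ys > 0" using Hpos by blast
  have ne: "{y. \<psi> y = 0} \<noteq> {}" using ys by blast
  obtain \<rho> :: "real^'m::{finite,wellorder} \<Rightarrow> real^'m::{finite,wellorder} \<Rightarrow> real" and d0 where
    \<rho>c: "\<And>x. continuous_on UNIV (\<rho> x)" and \<rho>nn: "\<And>x y. \<rho> x y \<ge> 0"
    and \<rho>z: "\<And>x y. y \<notin> cball x (ss x) \<Longrightarrow> \<rho> x y = 0"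
    and \<rho>p: "\<And>x y. x \<in> T \<Longrightarrow> y \<in> ball x (ss x) \<Longrightarrow> \<rho> x y > 0"
    and d0: "d0 > 0" and lay: "\<And>y. - d0 < \<psi> y \<Longrightarrow> \<psi> y \<le> 0 \<Longrightarrow> (\<Sum>x\<in>T. \<rho> x y) = 1"
    by (rule partition_data[OF c\<psi> comp T(2), of ss]) (use ssp T ys in \<open>auto simp: \<Gamma>_def\<close>)
  define F where "F x y = \<rho> x y * H y" for x y
  have sub: "cball x (ss x) \<subseteq> W" if "x \<in> T" for x
  proof -
    have "cball x (ss x) \<subseteq> cball x (rr x)" using rrp[of x] that T(1) by (auto simp: ss_def)
    then show ?thesis using P[of x] that T(1) by (auto simp: rr_def)
  qed
  have cF: "continuous_on UNIV (F x)" if "x \<in> T" for x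
    unfolding F_def[abs_def] by (rule cont_cutoff[OF \<rho>c cH W(1) sub[OF that] \<rho>z])
  have sF: "F x y = 0" if "y \<notin> cball x (ss x)" for x y using \<rho>z[OF that] by (simp add: F_def)
  have "\<forall>x\<in>T. \<exists>K. continuous_on UNIV K \<and> (\<exists>a b. \<forall>z. z \<notin> cbox a b \<longrightarrow> K z = 0) \<and>
     (\<forall>d>0. integral {y. - d < \<psi> y \<and> \<psi> y \<le> 0} (F x) = integral (slab (ii x) d) K) \<and>
     ((\<forall>y. \<psi> y = 0 \<longrightarrow> F x y \<ge> 0) \<longrightarrow> (\<forall>z. z $ ii x = 0 \<longrightarrow> K z \<ge> 0)) \<and>
     (\<forall>y. \<psi> y = 0 \<and> F x y > 0 \<longrightarrow> (\<exists>z. z $ ii x = 0 \<and> K z > 0))"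
  proof
    fix x assume xT: "x \<in> T"
    then have x\<Gamma>: "x \<in> \<Gamma>" using T(1) by blast
    have rs: "0 < ss x" "ss x < rr x" using rrp[OF x\<Gamma>] by (auto simp: ss_def)
    have nzx: "\<And>y. y \<in> cball x (rr x) \<Longrightarrow> gr y $ ii x \<noteq> 0" using P[OF x\<Gamma>] by (simp add: rr_def ii_def)
    show "\<exists>K. continuous_on UNIV K \<and> (\<exists>a b. \<forall>z. z \<notin> cbox a b \<longrightarrow> K z = 0) \<and>
     (\<forall>d>0. integral {y. - d < \<psi> y \<and> \<psi> y \<le> 0} (F x) = integral (slab (ii x) d) K) \<and>
     ((\<forall>y. \<psi> y = 0 \<longrightarrow> F x y \<ge> 0) \<longrightarrow> (\<forall>z. z $ ii x = 0 \<longrightarrow> K z \<ge> 0)) \<and>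
     (\<forall>y. \<psi> y = 0 \<and> F x y > 0 \<longrightarrow> (\<exists>z. z $ ii x = 0 \<and> K z > 0))"
      by (rule chart[where c=x and r="rr x" and s="ss x" and i="ii x" and F="F x", OF d\<psi> cgr rs nzx cF[OF xT] sF])
  qed
  then have "\<exists>KK. \<forall>x\<in>T. continuous_on UNIV (KK x) \<and> (\<exists>a b. \<forall>z. z \<notin> cbox a b \<longrightarrow> KK x z = 0) \<and>
     (\<forall>d>0. integral {y. - d < \<psi> y \<and> \<psi> y \<le> 0} (F x) = integral (slab (ii x) d) (KK x)) \<and>
     ((\<forall>y. \<psi> y = 0 \<longrightarrow> F x y \<ge> 0) \<longrightarrow> (\<forall>z. z $ ii x = 0 \<longrightarrow> KK x z \<ge> 0)) \<and>
     (\<forall>y. \<psi> y = 0 \<and> F x y > 0 \<longrightarrow> (\<exists>z. z $ ii x = 0 \<and> KK x z > 0))"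
    by (rule bchoice)
  then obtain KK where KK0: "\<forall>x\<in>T. continuous_on UNIV (KK x) \<and> (\<exists>a b. \<forall>z. z \<notin> cbox a b \<longrightarrow> KK x z = 0) \<and>
     (\<forall>d>0. integral {y. - d < \<psi> y \<and> \<psi> y \<le> 0} (F x) = integral (slab (ii x) d) (KK x)) \<and>
     ((\<forall>y. \<psi> y = 0 \<longrightarrow> F x y \<ge> 0) \<longrightarrow> (\<forall>z. z $ ii x = 0 \<longrightarrow> KK x z \<ge> 0)) \<and>
     (\<forall>y. \<psi> y = 0 \<and> F x y > 0 \<longrightarrow> (\<exists>z. z $ ii x = 0 \<and> KK x z > 0))"
    by (elim exE)
  have KKc: "continuous_on UNIV (KK x)" if "x \<in> T" for x using bspec[OF KK0 that] by blast
  have KKb: "\<exists>a b. \<forall>z. z \<notin> cbox a b \<longrightarrow> KK x z = 0" if "x \<in> T" for x using bspec[OF KK0 that] by blast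
  have KKi: "\<forall>d>0. integral {y. - d < \<psi> y \<and> \<psi> y \<le> 0} (F x) = integral (slab (ii x) d) (KK x)" if "x \<in> T" for x
    using bspec[OF KK0 that] by blast
  have KKn: "(\<forall>y. \<psi> y = 0 \<longrightarrow> F x y \<ge> 0) \<longrightarrow> (\<forall>z. z $ ii x = 0 \<longrightarrow> KK x z \<ge> 0)" if "x \<in> T" for x
    using bspec[OF KK0 that] by blast
  have KKp: "\<forall>y. \<psi> y = 0 \<and> F x y > 0 \<longrightarrow> (\<exists>z. z $ ii x = 0 \<and> KK x z > 0)" if "x \<in> T" for x
    using bspec[OF KK0 that] by blast
  define Lx where "Lx x = integral (slab (ii x) 1) (\<lambda>z. KK x (prj (ii x) z))" for x
  have Fnn: "\<forall>y. \<psi> y = 0 \<longrightarrow> F x y \<ge> 0" for x using \<rho>nn Hnn by (simp add: F_def)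
  have lim: "((\<lambda>d. integral (slab (ii x) d) (KK x) / d) \<longlongrightarrow> Lx x) (at_right 0)" if xT: "x \<in> T" for x
  proof -
    obtain a b where ab: "\<And>z. z \<notin> cbox a b \<Longrightarrow> KK x z = 0" using KKb[OF xT] by blast
    show ?thesis unfolding Lx_def by (rule slab_limit[OF KKc[OF xT] ab])
  qed
  have Lnn: "Lx x \<ge> 0" if xT: "x \<in> T" for x
  proof -
    obtain a b where ab: "\<And>z. z \<notin> cbox a b \<Longrightarrow> KK x z = 0" using KKb[OF xT] by blast
    have nn: "\<And>z. z $ ii x = 0 \<Longrightarrow> KK x z \<ge> 0" using KKn[OF xT] Fnn by blast
    show ?thesis unfolding Lx_def by (rule slab_value(1)[OF KKc[OF xT] ab nn])
  qed
  have Lpos: "\<exists>x\<in>T. Lx x > 0"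
  proof -
    have "ys \<in> \<Gamma>" using ys by (simp add: \<Gamma>_def)
    then obtain x where x: "x \<in> T" "ys \<in> ball x (ss x)" using T(3) by blast
    have "F x ys > 0" using \<rho>p[OF x] ys by (simp add: F_def)
    then have ex: "\<exists>z. z $ ii x = 0 \<and> KK x z > 0" using KKp[OF x(1)] ys by blast
    obtain a b where ab: "\<And>z. z \<notin> cbox a b \<Longrightarrow> KK x z = 0" using KKb[OF x(1)] by blast
    have nn: "\<And>z. z $ ii x = 0 \<Longrightarrow> KK x z \<ge> 0" using KKn[OF x(1)] Fnn by blast
    have "Lx x > 0" unfolding Lx_def by (rule slab_value(2)[OF KKc[OF x(1)] ab nn ex])
    then show ?thesis using x by blast
  qed
  have sumlim: "((\<lambda>d. \<Sum>x\<in>T. integral (slab (ii x) d) (KK x) / d) \<longlongrightarrow> (\<Sum>x\<in>T. Lx x)) (at_right 0)"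
    by (rule tendsto_sum) (rule lim)
  have ev: "\<forall>\<^sub>F d in at_right 0. (\<Sum>x\<in>T. integral (slab (ii x) d) (KK x) / d) =
              integral {y. - d < \<psi> y \<and> \<psi> y \<le> 0} H / d"
    unfolding eventually_at_right_field
  proof (intro exI[of _ d0] conjI allI impI)
    show "(0::real) < d0" by (fact d0)
    fix d :: real assume d: "0 < d" "d < d0"
    let ?L = "{y. - d < \<psi> y \<and> \<psi> y \<le> 0}"
    have Lm: "?L \<in> sets lebesgue" by (rule layer_sets[OF c\<psi>])
    have Fi: "F x integrable_on ?L" if "x \<in> T" for x
    proof -
      obtain a where a: "cball x (ss x) \<subseteq> cbox (-a) a"
        using bounded_subset_cbox_symmetric[OF bounded_cball] by blast
      have "F x absolutely_integrable_on ?L"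
        by (rule ai_support[where a="-a" and b=a, OF cF[OF that] _ Lm]) (use a sF in blast)
      then show ?thesis using absolutely_integrable_on_def by blast
    qed
    have "integral ?L H = integral ?L (\<lambda>y. \<Sum>x\<in>T. F x y)"
    proof (rule integral_cong)
      fix y assume y: "y \<in> ?L"
      then have "(\<Sum>x\<in>T. \<rho> x y) = 1" using lay d by force
      then show "H y = (\<Sum>x\<in>T. F x y)" by (simp add: F_def sum_distrib_right[symmetric])
    qed
    also have "\<dots> = (\<Sum>x\<in>T. integral ?L (F x))" by (rule integral_sum[OF T(2) Fi])
    also have "\<dots> = (\<Sum>x\<in>T. integral (slab (ii x) d) (KK x))"
      by (rule sum.cong) (use KKi d in auto)
    finally show "(\<Sum>x\<in>T. integral (slab (ii x) d) (KK x) / d) = integral ?L H / d"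
      by (simp add: sum_divide_distrib)
  qed
  have "(\<Sum>x\<in>T. Lx x) > 0"
  proof -
    obtain x where "x \<in> T" "Lx x > 0" using Lpos by blast
    then show ?thesis using sum_pos2[of T x Lx] T(2) Lnn by blast
  qed
  then show ?thesis using Lim_transform_eventually[OF sumlim ev] by blast
qed

typedef 'a wo = "UNIV :: 'a set" by simp

instance wo :: (finite) finite
proof
  have "(UNIV :: 'a wo set) = Abs_wo ` UNIV"
    by (metis Abs_wo_cases surj_def)
  then show "finite (UNIV :: 'a wo set)" by (metis finite finite_imageI)
qed

instantiation wo :: (finite) linorder
begin
definition less_eq_wo :: "'a wo \<Rightarrow> 'a wo \<Rightarrow> bool" where
  "less_eq_wo x y \<longleftrightarrow> to_nat (Rep_wo x) \<le> to_nat (Rep_wo y)"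
definition less_wo :: "'a wo \<Rightarrow> 'a wo \<Rightarrow> bool" where
  "less_wo x y \<longleftrightarrow> to_nat (Rep_wo x) < to_nat (Rep_wo y)"
instance
proof
  have inj: "to_nat (Rep_wo x) = to_nat (Rep_wo y) \<Longrightarrow> x = y" for x y :: "'a wo"
    by (metis Rep_wo_inject to_nat_split)
  fix x y z :: "'a wo"
  show "(x < y) = (x \<le> y \<and> \<not> y \<le> x)" by (auto simp: less_eq_wo_def less_wo_def)
  show "x \<le> x" by (simp add: less_eq_wo_def)
  show "x \<le> y \<Longrightarrow> y \<le> z \<Longrightarrow> x \<le> z" by (simp add: less_eq_wo_def)
  show "x \<le> y \<Longrightarrow> y \<le> x \<Longrightarrow> x = y" using inj by (simp add: less_eq_wo_def)
  show "x \<le> y \<or> y \<le> x" by (auto simp: less_eq_wo_def)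
qed
end

instance wo :: (finite) wellorder
proof
  fix P :: "'a wo \<Rightarrow> bool" and a :: "'a wo"
  assume step: "\<And>x. (\<And>y. y < x \<Longrightarrow> P y) \<Longrightarrow> P x"
  show "P a"
  proof (induction a rule: measure_induct_rule[where f="\<lambda>x. to_nat (Rep_wo x)"])
    case (less x)
    then show ?case using step by (simp add: less_wo_def)
  qed
qed

definition Tw :: "real^'n::finite \<Rightarrow> real^('n wo)" where
  "Tw x = (\<chi> j. x $ Rep_wo j)"

definition Tiw :: "real^('n::finite wo) \<Rightarrow> real^'n" where
  "Tiw y = (\<chi> i. y $ Abs_wo i)"

lemma Tw_nth: "Tw x $ j = x $ Rep_wo j" by (simp add: Tw_def)
lemma Tiw_nth: "Tiw y $ i = y $ Abs_wo i" by (simp add: Tiw_def)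
lemma Tw_Tiw [simp]: "Tw (Tiw y) = y" by (simp add: vec_eq_iff Tw_nth Tiw_nth Rep_wo_inverse)
lemma Tiw_Tw [simp]: "Tiw (Tw x) = x" by (simp add: vec_eq_iff Tw_nth Tiw_nth Abs_wo_inverse)

lemma linear_Tw: "linear Tw"
  by (rule linearI) (simp_all add: vec_eq_iff Tw_nth)
lemma linear_Tiw: "linear Tiw"
  by (rule linearI) (simp_all add: vec_eq_iff Tiw_nth)

lemma bij_Rep_wo: "bij_betw Rep_wo UNIV UNIV"
  by (metis Rep_wo_inject UNIV_I bij_betw_def inj_onI surj_def Abs_wo_inverse)

lemma inner_Tw: "Tw a \<bullet> Tw b = a \<bullet> b"
proof -
  have "Tw a \<bullet> Tw b = (\<Sum>j\<in>UNIV. a $ Rep_wo j * b $ Rep_wo j)" by (simp add: inner_vec_def Tw_nth)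
  also have "\<dots> = (\<Sum>i\<in>UNIV. a $ i * b $ i)"
    by (rule sum.reindex_bij_betw[OF bij_Rep_wo, of "\<lambda>i. a $ i * b $ i"])
  finally show ?thesis by (simp add: inner_vec_def)
qed

lemma inner_Tiw: "a \<bullet> Tiw h = Tw a \<bullet> h"
  using inner_Tw[of a "Tiw h"] by simp

lemma Tiw_image_cbox: "Tiw ` cbox u v = cbox (Tiw u) (Tiw v)"
proof
  show "Tiw ` cbox u v \<subseteq> cbox (Tiw u) (Tiw v)"
    by (auto simp: mem_box_cart Tiw_nth)
  show "cbox (Tiw u) (Tiw v) \<subseteq> Tiw ` cbox u v"
  proof
    fix x assume x: "x \<in> cbox (Tiw u) (Tiw v)"
    have "Tw x \<in> cbox u v"
    proof -
      have "u $ j \<le> Tw x $ j \<and> Tw x $ j \<le> v $ j" for j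
        using x[unfolded mem_box_cart, rule_format, of "Rep_wo j"] by (simp add: Tw_nth Tiw_nth Rep_wo_inverse)
      then show ?thesis by (simp add: mem_box_cart)
    qed
    then show "x \<in> Tiw ` cbox u v" by (metis Tiw_Tw image_eqI)
  qed
qed

lemma Tw_image_cbox: "Tw ` cbox u v = cbox (Tw u) (Tw v)"
proof
  show "Tw ` cbox u v \<subseteq> cbox (Tw u) (Tw v)"
    by (auto simp: mem_box_cart Tw_nth)
  show "cbox (Tw u) (Tw v) \<subseteq> Tw ` cbox u v"
  proof
    fix x assume x: "x \<in> cbox (Tw u) (Tw v)"
    have "Tiw x \<in> cbox u v"
    proof -
      have "u $ j \<le> Tiw x $ j \<and> Tiw x $ j \<le> v $ j" for j
        using x[unfolded mem_box_cart, rule_format, of "Abs_wo j"] by (simp add: Tw_nth Tiw_nth Abs_wo_inverse)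
      then show ?thesis by (simp add: mem_box_cart)
    qed
    then show "x \<in> Tw ` cbox u v" by (metis Tw_Tiw image_eqI)
  qed
qed

lemma content_Tiw_cbox: "Henstock_Kurzweil_Integration.content (Tiw ` cbox u v) = Henstock_Kurzweil_Integration.content (cbox u v)"
proof (cases "cbox u v = {}")
  case True then show ?thesis by simp
next
  case False
  then have ne: "cbox (Tiw u) (Tiw v) \<noteq> {}" using Tiw_image_cbox by (metis image_is_empty)
  have "Henstock_Kurzweil_Integration.content (Tiw ` cbox u v) = (\<Prod>i\<in>UNIV. Tiw v $ i - Tiw u $ i)"
    unfolding Tiw_image_cbox using content_cbox_cart[OF ne] by simp
  also have "\<dots> = (\<Prod>i\<in>UNIV. v $ Abs_wo i - u $ Abs_wo i)" by (simp add: Tiw_nth)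
  also have "\<dots> = (\<Prod>j\<in>UNIV. v $ j - u $ j)"
  proof -
    have "bij_betw Abs_wo UNIV UNIV"
      by (metis Abs_wo_inject UNIV_I bij_betw_def inj_onI surj_def Rep_wo_inverse)
    then show ?thesis by (rule prod.reindex_bij_betw)
  qed
  also have "\<dots> = Henstock_Kurzweil_Integration.content (cbox u v)" using content_cbox_cart[OF False] by simp
  finally show ?thesis .
qed

lemma transport_integral:
  fixes f :: "real^'n::finite \<Rightarrow> real"
  assumes fi: "f integrable_on S" and bS: "bounded S"
  shows "integral (Tw ` S) (\<lambda>y. f (Tiw y)) = integral S f"
proof -
  obtain a where a: "S \<subseteq> cbox (-a) a" using bounded_subset_cbox_symmetric[OF bS] by blast
  define g where "g x = (if x \<in> S then f x else 0)" for x
  have gI: "(g has_integral integral S f) (cbox (-a) a)"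
    unfolding g_def by (subst has_integral_restrict[OF a]) (rule integrable_integral[OF fi])
  have cTiw: "continuous (at x) Tiw" for x
    using linear_Tiw linear_continuous_at linear_conv_bounded_linear by blast
  have "((\<lambda>y. g (Tiw y)) has_integral (1 / 1) *\<^sub>R integral S f) (Tw ` cbox (-a) a)"
  proof (rule has_integral_twiddle[OF _ _ _ cTiw _ _ _ gI])
    show "\<And>x. Tw (Tiw x) = x" by simp
    show "\<And>x. Tiw (Tw x) = x" by simp
    show "\<And>u v. \<exists>w z. Tiw ` cbox u v = cbox w z" using Tiw_image_cbox by blast
    show "\<And>u v. \<exists>w z. Tw ` cbox u v = cbox w z" using Tw_image_cbox by blast
    show "\<And>u v. Henstock_Kurzweil_Integration.content (Tiw ` cbox u v) = 1 * Henstock_Kurzweil_Integration.content (cbox u v)" using content_Tiw_cbox by simp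
  qed simp
  then have h: "((\<lambda>y. if y \<in> Tw ` S then f (Tiw y) else 0) has_integral integral S f) (Tw ` cbox (-a) a)"
  proof -
    have "(\<lambda>y. g (Tiw y)) = (\<lambda>y. if y \<in> Tw ` S then f (Tiw y) else 0)"
    proof
      fix y
      have "Tiw y \<in> S \<longleftrightarrow> y \<in> Tw ` S" by (metis Tw_Tiw Tiw_Tw image_iff)
      then show "g (Tiw y) = (if y \<in> Tw ` S then f (Tiw y) else 0)" by (simp add: g_def)
    qed
    then show ?thesis using \<open>((\<lambda>y. g (Tiw y)) has_integral _) _\<close> by simp
  qed
  have "Tw ` S \<subseteq> Tw ` cbox (-a) a" using a by blast
  from has_integral_restrict[OF this, of "\<lambda>y. f (Tiw y)"] h
  have "((\<lambda>y. f (Tiw y)) has_integral integral S f) (Tw ` S)"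
    by blast
  then show ?thesis by (rule integral_unique)
qed


lemma BI_pos:
  fixes \<phi> g :: "real^'n::finite \<Rightarrow> real"
  assumes dom: "smooth_bounded_domain \<Omega> \<phi>"
    and gU: "\<exists>U. open U \<and> closure \<Omega> \<subseteq> U \<and> smooth_on g U"
    and gpos: "\<forall>x\<in>closure \<Omega>. g x > 0"
  shows "boundary_integral \<phi> g > 0"
proof -
  note B = dom_basic[OF dom]
  note Cl = dom_closure[OF dom]
  obtain U where U: "open U" "closure \<Omega> \<subseteq> U" "smooth_on g U" using gU by blast
  have cg: "continuous_on U g" using smooth_on_C2(1)[OF U(3)] .
  define G where "G x = g x * norm (grad \<phi> x)" for x
  define \<psi> where "\<psi> y = \<phi> (Tiw y)" for y
  define gr where "gr y = Tw (grad \<phi> (Tiw y))" for y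
  define H where "H y = G (Tiw y)" for y
  define W where "W = Tiw -` U"
  have cTiw: "continuous_on UNIV Tiw"
    using linear_Tiw linear_continuous_on linear_conv_bounded_linear by blast
  have cTw: "continuous_on UNIV Tw"
    using linear_Tw linear_continuous_on linear_conv_bounded_linear by blast
  have d\<psi>: "(\<psi> has_derivative (\<lambda>h. gr y \<bullet> h)) (at y)" for y
  proof -
    have "(Tiw has_derivative Tiw) (at y)" by (rule linear_imp_has_derivative[OF linear_Tiw])
    from has_derivative_compose[OF this B(3)[of "Tiw y"]]
    have "((\<lambda>y. \<phi> (Tiw y)) has_derivative (\<lambda>h. grad \<phi> (Tiw y) \<bullet> Tiw h)) (at y)" .
    then show ?thesis unfolding \<psi>_def gr_def inner_Tiw .
  qed
  have cgrad: "continuous_on UNIV (grad \<phi>)" by (fact B(4))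
  have cgr: "continuous_on UNIV gr"
  proof -
    have "continuous_on UNIV (\<lambda>y. grad \<phi> (Tiw y))"
      by (rule continuous_on_compose2[OF cgrad cTiw]) auto
    then show ?thesis unfolding gr_def[abs_def]
      by (rule continuous_on_compose2[OF cTw]) auto
  qed
  have psi_set: "{y. \<psi> y \<le> 0} = Tw ` closure \<Omega>"
  proof
    show "{y. \<psi> y \<le> 0} \<subseteq> Tw ` closure \<Omega>"
    proof
      fix y assume "y \<in> {y. \<psi> y \<le> 0}"
      then have "Tiw y \<in> closure \<Omega>" using Cl(1) by (simp add: \<psi>_def)
      then show "y \<in> Tw ` closure \<Omega>" by (metis Tw_Tiw image_eqI)
    qed
    show "Tw ` closure \<Omega> \<subseteq> {y. \<psi> y \<le> 0}" using Cl(1) by (auto simp: \<psi>_def)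
  qed
  have comp: "compact {y. \<psi> y \<le> 0}"
    unfolding psi_set by (rule compact_continuous_image[OF continuous_on_subset[OF cTw] Cl(3)]) simp
  have nz: "gr y \<noteq> 0" if "\<psi> y = 0" for y
  proof
    assume "gr y = 0"
    then have "Tiw (Tw (grad \<phi> (Tiw y))) = Tiw 0" by (simp add: gr_def)
    then have "grad \<phi> (Tiw y) = 0" using linear_0[OF linear_Tiw] by simp
    then show False using B(8) that by (simp add: \<psi>_def)
  qed
  have Wopen: "open W" unfolding W_def
    using open_vimage[OF U(1) cTiw] .
  have Wsub: "{y. \<psi> y \<le> 0} \<subseteq> W"
    using U(2) Cl(1) by (auto simp: W_def \<psi>_def)
  have cH: "continuous_on W H"
  proof -
    have "continuous_on W (\<lambda>y. g (Tiw y))"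
      by (rule continuous_on_compose2[OF cg continuous_on_subset[OF cTiw]]) (auto simp: W_def)
    moreover have "continuous_on W (\<lambda>y. norm (grad \<phi> (Tiw y)))"
      by (intro continuous_intros continuous_on_compose2[OF cgrad continuous_on_subset[OF cTiw]]) auto
    ultimately show ?thesis unfolding H_def[abs_def] G_def by (rule continuous_on_mult)
  qed
  have Hnn: "H y \<ge> 0" if "\<psi> y = 0" for y
  proof -
    have "Tiw y \<in> closure \<Omega>" using that Cl(1) by (simp add: \<psi>_def)
    then have "g (Tiw y) > 0" using gpos by blast
    then show ?thesis by (simp add: H_def G_def)
  qed
  have Hpos: "\<exists>y. \<psi> y = 0 \<and> H y > 0"
  proof -
    have "\<Omega> \<noteq> UNIV" using B(6) not_bounded_UNIV by metis
    then have "frontier \<Omega> \<noteq> {}" using B(7) frontier_eq_empty by blast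
    then obtain x0 where x0: "x0 \<in> frontier \<Omega>" by blast
    then have p0: "\<phi> x0 = 0" using Cl(2) by blast
    have "x0 \<in> closure \<Omega>" using x0 Cl(1) Cl(2) by auto
    then have "g x0 > 0" using gpos by blast
    moreover have "norm (grad \<phi> x0) > 0" using B(8)[OF p0] by simp
    ultimately have "H (Tw x0) > 0" by (simp add: H_def G_def)
    moreover have "\<psi> (Tw x0) = 0" using p0 by (simp add: \<psi>_def)
    ultimately show ?thesis by blast
  qed
  obtain L where L: "L > 0"
    "((\<lambda>d. integral {y. - d < \<psi> y \<and> \<psi> y \<le> 0} H / d) \<longlongrightarrow> L) (at_right 0)"
    using core[OF d\<psi> cgr comp nz Wopen Wsub cH Hnn Hpos] by blast
  have cG: "continuous_on (closure \<Omega>) G"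
  proof -
    have "continuous_on (closure \<Omega>) g" using continuous_on_subset[OF cg U(2)] .
    moreover have "continuous_on (closure \<Omega>) (\<lambda>x. norm (grad \<phi> x))"
      by (intro continuous_intros continuous_on_subset[OF cgrad]) auto
    ultimately show ?thesis unfolding G_def[abs_def] by (rule continuous_on_mult)
  qed
  have eq: "(1 / d) * (LINT x:{x. - d < \<phi> x \<and> \<phi> x \<le> 0}|lebesgue. g x * norm (grad \<phi> x)) =
            integral {y. - d < \<psi> y \<and> \<psi> y \<le> 0} H / d" if d: "d > 0" for d
  proof -
    let ?L = "{x. - d < \<phi> x \<and> \<phi> x \<le> 0}"
    have Lm: "?L \<in> sets lebesgue" by (rule layer_sets[OF B(2)])
    have Lsub: "?L \<subseteq> closure \<Omega>" using Cl(1) by auto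
    have ai: "G absolutely_integrable_on ?L" by (rule ai_compact[OF Cl(3) cG Lm Lsub])
    have l1: "(LINT x:?L|lebesgue. g x * norm (grad \<phi> x)) = integral ?L G"
      using set_lebesgue_integral_eq_integral(2)[OF ai] by (simp add: G_def)
    have img: "Tw ` ?L = {y. - d < \<psi> y \<and> \<psi> y \<le> 0}"
    proof
      show "Tw ` ?L \<subseteq> {y. - d < \<psi> y \<and> \<psi> y \<le> 0}" by (auto simp: \<psi>_def)
      show "{y. - d < \<psi> y \<and> \<psi> y \<le> 0} \<subseteq> Tw ` ?L"
      proof
        fix y assume "y \<in> {y. - d < \<psi> y \<and> \<psi> y \<le> 0}"
        then have "Tiw y \<in> ?L" by (simp add: \<psi>_def)
        then show "y \<in> Tw ` ?L" by (metis Tw_Tiw image_eqI)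
      qed
    qed
    have Gi: "G integrable_on ?L" using ai absolutely_integrable_on_def by blast
    have bL: "bounded ?L" using Lsub Cl(3) compact_imp_bounded bounded_subset by blast
    have "integral {y. - d < \<psi> y \<and> \<psi> y \<le> 0} H = integral ?L G"
      using transport_integral[OF Gi bL] img by (simp add: H_def[abs_def])
    then show ?thesis using l1 by simp
  qed
  have ev: "\<forall>\<^sub>F d in at_right 0. integral {y. - d < \<psi> y \<and> \<psi> y \<le> 0} H / d =
       (1 / d) * (LINT x:{x. - d < \<phi> x \<and> \<phi> x \<le> 0}|lebesgue. g x * norm (grad \<phi> x))"
    unfolding eventually_at_right_field
    by (intro exI[of _ 1]) (use eq in auto)
  have "((\<lambda>d. (1 / d) * (LINT x:{x. - d < \<phi> x \<and> \<phi> x \<le> 0}|lebesgue. g x * norm (grad \<phi> x))) \<longlongrightarrow> L) (at_right 0)"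
    by (rule Lim_transform_eventually[OF L(2) ev])
  then have "boundary_integral \<phi> g = L"
    unfolding boundary_integral_def by (rule tendsto_Lim[OF trivial_limit_at_right_real])
  then show ?thesis using L(1) by simp
qed

lemma final_algebra_min:
  fixes A B p q a b m :: real
  assumes "A > 0" "B > 0" "p > 0" "q > 0" "a \<ge> 1" "b \<ge> 1" "m \<le> 0"
    and "b \<le> exp (- q * m)"
    and "A * exp (p * m) / a - B * exp (- q * m) / b \<ge> 0"
  shows "a \<le> A / B" "b \<le> (A / B) powr (q / p)"
proof -
  let ?E1 = "exp (p * m)" and ?E2 = "exp (- q * m)"
  have a0: "a > 0" "b > 0" using assms by auto
  have "B * ?E2 / b \<le> A * ?E1 / a" using assms(9) by simp
  then have k: "B * ?E2 * a \<le> A * ?E1 * b" using a0 by (simp add: field_simps)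
  have "A * ?E1 * b \<le> A * ?E1 * ?E2" using assms(1,8) by simp
  with k have "B * ?E2 * a \<le> A * ?E1 * ?E2" by linarith
  then have k2: "B * a \<le> A * ?E1" by simp
  have E1: "?E1 \<le> 1" using assms(3,7) by (simp add: mult_nonneg_nonpos)
  have "A * ?E1 \<le> A" using E1 assms(1) by simp
  then have "B * a \<le> A" using k2 by linarith
  then show "a \<le> A / B" using assms(2) by (simp add: field_simps)
  have "B \<le> B * a" using assms(2,5) by simp
  then have "B \<le> A * ?E1" using k2 by linarith
  then have "B / A \<le> ?E1" using assms(1) by (simp add: field_simps)
  then have "ln (B / A) \<le> ln ?E1" using assms(1,2) by (subst ln_le_cancel_iff) auto
  then have l: "ln (B / A) \<le> p * m" by simp
  have "ln (A / B) = - ln (B / A)" using assms(1,2) by (simp add: ln_div)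
  then have "- (p * m) \<le> ln (A / B)" using l by linarith
  then have "(q / p) * (- (p * m)) \<le> (q / p) * ln (A / B)"
    using assms(3,4) by (intro mult_left_mono) auto
  then have "- q * m \<le> (q / p) * ln (A / B)" using assms(3) by simp
  then have "?E2 \<le> exp ((q / p) * ln (A / B))" by simp
  also have "\<dots> = (A / B) powr (q / p)" using assms(1,2) by (simp add: powr_def)
  finally show "b \<le> (A / B) powr (q / p)" using assms(8) by linarith
qed

theorem corollary3p3:
  fixes \<Omega> :: "(real^'n::finite) set" and \<phi> g u :: "real^'n \<Rightarrow> real"
    and A B p q \<epsilon> :: real
  assumes "CARD('n) \<ge> 2"
    and "smooth_bounded_domain \<Omega> \<phi>"
    and "\<exists>U. open U \<and> closure \<Omega> \<subseteq> U \<and> smooth_on g U"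
    and "\<forall>x\<in>closure \<Omega>. g x > 0"
    and "A > 0" "B > 0" "p > 0" "q > 0"
    and "(A - B) * (p - q) \<ge> 0" "A \<noteq> B"
    and "\<epsilon> > 0"
    and "solves_N \<Omega> \<phi> g A B p q \<epsilon> u"
  shows "1 \<le> mean \<Omega> (\<lambda>x. exp (p * u x)) \<and>
         mean \<Omega> (\<lambda>x. exp (p * u x)) \<le> max (A / B) ((B / A) powr (p / q)) \<and>
         1 \<le> mean \<Omega> (\<lambda>x. exp (- q * u x)) \<and>
         mean \<Omega> (\<lambda>x. exp (- q * u x)) \<le> max (B / A) ((A / B) powr (q / p))"
proof -
  note dom = assms(2)
  note B = dom_basic[OF dom]
  note Cl = dom_closure[OF dom]
  obtain U where U: "open U" "closure \<Omega> \<subseteq> U" "smooth_on g U" using assms(3) by blast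
  have gdiff: "g differentiable (at x)" if "x \<in> closure \<Omega>" for x
    using smooth_on_C2(2)[OF U(3)] U(2) that by blast
  from assms(12) obtain Du where
    su: "smooth_on u \<Omega>" and cu: "continuous_on (closure \<Omega>) u" and
    cD: "continuous_on (closure \<Omega>) Du" and
    dD: "\<forall>x\<in>\<Omega>. (u has_derivative (\<lambda>h. Du x \<bullet> h)) (at x)" and
    neu: "\<forall>x\<in>frontier \<Omega>. \<epsilon>\<^sup>2 * (Du x \<bullet> outward_normal \<phi> x) =
               measure lebesgue \<Omega> * (A - B) / boundary_integral \<phi> g" and
    pde: "\<forall>x\<in>\<Omega>. \<epsilon>\<^sup>2 * divergence (\<lambda>y. g y *\<^sub>R grad u y) x =
         A * exp (p * u x) / mean \<Omega> (\<lambda>y. exp (p * u y))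
       - B * exp (- q * u x) / mean \<Omega> (\<lambda>y. exp (- q * u y))" and
    zm: "(LINT x:\<Omega>|lebesgue. u x) = 0"
    unfolding solves_N_def by blast
  have BI: "boundary_integral \<phi> g > 0" using BI_pos[OF dom assms(3) assms(4)] .
  define V where "V = measure lebesgue \<Omega>"
  have Om: "\<Omega> \<in> sets lebesgue" using B(5) by (simp add: borel_open)
  have Vpos: "V > 0"
  proof -
    obtain x where x: "x \<in> \<Omega>" using B(7) by blast
    obtain r where r: "r > 0" "ball x r \<subseteq> \<Omega>" using B(5) x open_contains_ball by blast
    have lm: "\<Omega> \<in> lmeasurable" using B(6) Om bounded_set_imp_lmeasurable by blast
    have "measure lebesgue (ball x r) \<le> measure lebesgue \<Omega>"
      by (rule measure_mono_fmeasurable) (use r lm in auto)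
    moreover have "measure lebesgue (ball x r) > 0" using content_ball_pos[OF r(1)] by simp
    ultimately show ?thesis unfolding V_def by linarith
  qed
  have Vpos': "measure lebesgue \<Omega> > 0" using Vpos V_def by simp
  have K: "compact (closure \<Omega>)" "\<Omega> \<subseteq> closure \<Omega>" using Cl(3) closure_subset by auto
  have ne: "closure \<Omega> \<noteq> {}" using B(7) K(2) by blast
  define a where "a = mean \<Omega> (\<lambda>x. exp (p * u x))"
  define b where "b = mean \<Omega> (\<lambda>x. exp (- q * u x))"
  have a1: "1 \<le> a" unfolding a_def by (rule mean_exp_ge1[OF Om Vpos' K cu zm])
  have b1: "1 \<le> b" unfolding b_def by (rule mean_exp_ge1[OF Om Vpos' K cu zm])
  have ce1: "continuous_on (closure \<Omega>) (\<lambda>x. exp (p * u x))" by (intro continuous_intros cu)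
  have ce2: "continuous_on (closure \<Omega>) (\<lambda>x. exp (- q * u x))" by (intro continuous_intros cu)
  have mu0: "mean \<Omega> u = 0" unfolding mean_def zm by simp
  obtain xm where xm: "xm \<in> closure \<Omega>" "\<forall>y\<in>closure \<Omega>. u xm \<le> u y"
    using continuous_attains_inf[OF K(1) ne cu] by blast
  obtain xM where xM: "xM \<in> closure \<Omega>" "\<forall>y\<in>closure \<Omega>. u y \<le> u xM"
    using continuous_attains_sup[OF K(1) ne cu] by blast
  have m0: "u xm \<le> 0" using mean_bounds(3)[OF Om Vpos' K cu, of "u xm"] xm K(2) mu0 by auto
  have M0: "u xM \<ge> 0" using mean_bounds(2)[OF Om Vpos' K cu, of "u xM"] xM K(2) mu0 by auto
  have bm: "b \<le> exp (- q * u xm)" unfolding b_def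
    by (rule mean_bounds(2)[OF Om Vpos' K ce2]) (use xm K(2) assms(8) in auto)
  have aM: "a \<le> exp (p * u xM)" unfolding a_def
    by (rule mean_bounds(2)[OF Om Vpos' K ce1]) (use xM K(2) assms(7) in auto)
  have clsplit: "x \<in> \<Omega> \<or> x \<in> frontier \<Omega>" if "x \<in> closure \<Omega>" for x
    using that unfolding frontier_def interior_open[OF B(5)] by blast
  have e2: "\<epsilon>\<^sup>2 > 0" using assms(11) by simp
  show ?thesis
  proof (cases "A > B")
    case True
    have c: "V * (A - B) / boundary_integral \<phi> g > 0" using Vpos True BI by simp
    have "xm \<in> \<Omega>"
    proof (rule ccontr)
      assume "xm \<notin> \<Omega>"
      then have fr: "xm \<in> frontier \<Omega>" using clsplit xm(1) by blast
      have "1 * (Du xm \<bullet> outward_normal \<phi> xm) \<le> 0"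
        by (rule boundary_ext[OF dom fr cu cD dD]) (use xm in auto)
      then have "\<epsilon>\<^sup>2 * (Du xm \<bullet> outward_normal \<phi> xm) \<le> 0" using e2 by (simp add: mult_nonneg_nonpos)
      then show False using neu fr c V_def by auto
    qed
    then have "1 * divergence (\<lambda>y. g y *\<^sub>R grad u y) xm \<ge> 0"
      by (intro interior_ext_div[OF B(5) su]) (use xm gdiff assms(4) K(2) in auto)
    then have "\<epsilon>\<^sup>2 * divergence (\<lambda>y. g y *\<^sub>R grad u y) xm \<ge> 0" using e2 by simp
    then have r: "A * exp (p * u xm) / a - B * exp (- q * u xm) / b \<ge> 0"
      using pde \<open>xm \<in> \<Omega>\<close> by (simp add: a_def b_def)
    note fa = final_algebra_min[OF assms(5-8) a1 b1 m0 bm r]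
    show ?thesis using fa a1 b1 unfolding a_def b_def by auto
  next
    case False
    then have AB: "A < B" using assms(10) by simp
    have c: "V * (A - B) / boundary_integral \<phi> g < 0" using Vpos AB BI by (simp add: divide_neg_pos mult_pos_neg)
    have "xM \<in> \<Omega>"
    proof (rule ccontr)
      assume "xM \<notin> \<Omega>"
      then have fr: "xM \<in> frontier \<Omega>" using clsplit xM(1) by blast
      have "(-1) * (Du xM \<bullet> outward_normal \<phi> xM) \<le> 0"
        by (rule boundary_ext[OF dom fr cu cD dD]) (use xM in auto)
      then have "\<epsilon>\<^sup>2 * (Du xM \<bullet> outward_normal \<phi> xM) \<ge> 0" using e2 by simp
      then show False using neu fr c V_def by auto
    qed
    then have "(-1) * divergence (\<lambda>y. g y *\<^sub>R grad u y) xM \<ge> 0"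
      by (intro interior_ext_div[OF B(5) su]) (use xM gdiff assms(4) K(2) in auto)
    then have "\<epsilon>\<^sup>2 * divergence (\<lambda>y. g y *\<^sub>R grad u y) xM \<le> 0" using e2 by (simp add: mult_nonneg_nonpos)
    then have r0: "A * exp (p * u xM) / a - B * exp (- q * u xM) / b \<le> 0"
      using pde \<open>xM \<in> \<Omega>\<close> by (simp add: a_def b_def)
    have r: "B * exp (q * (- u xM)) / b - A * exp (- p * (- u xM)) / a \<ge> 0" using r0 by simp
    have aM': "a \<le> exp (- p * (- u xM))" using aM by simp
    note fa = final_algebra_min[OF assms(6,5,8,7) b1 a1 _ aM' r] M0
    show ?thesis using fa a1 b1 unfolding a_def b_def by auto
  qed
qed

end
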